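(* Let $\mathbf{k}$ be an admissible index and $\mathbf{k}'$ its dual index. Then $Z(\mathbf{k};\alpha,\beta)=Z(\mathbf{k}';\beta,\alpha)$ for all $\alpha,\beta\in\mathbb{C}$ with $\mathrm{Re}\,\alpha>0$ and $\mathrm{Re}\,\beta>0$.
   Context: An index $(k_1,\ldots,k_n)$ is admissible if all $k_i$ are positive integers and $k_n\ge2$. For $a\in\mathbb{C}$, $(a)_0=1$ and $(a)_m=a(a+1)\cdots(a+m-1)$ for $m\ge1$. For an admissible index and $\mathrm{Re}\,\alpha>0$, $\beta\notin\mathbb{Z}_{\le0}$, \[ Z(k_1,\ldots,k_n;\alpha,\beta)=\sum_{0\le m_1<\cdots<m_n}\frac{(\alpha)_{m_1}}{m_1!}\frac{m_n!}{(\alpha)_{m_n+1}}\frac{1}{(m_1+\beta)^{k_1}\cdots(m_{n-1}+\beta)^{k_{n-1}}(m_n+\beta)^{k_n-1}}. \] Every admissible index can be written uniquely as $(\{1\}^{a_1},b_1+2,\ldots,\{1\}^{a_s},b_s+2)$ with $a_j,b_j\in\mathbb{Z}_{\ge0}$ ($\{1\}^a$ meaning $a$ consecutive $1$'s); its dual index is $(\{1\}^{b_s},a_s+2,\ldots,\{1\}^{b_1},a_1+2)$. *)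

theory Defs
  imports "HOL-Analysis.Analysis"
begin

definition admissible :: "nat list \<Rightarrow> bool" where
  "admissible ks \<longleftrightarrow> ks \<noteq> [] \<and> (\<forall>k\<in>set ks. k \<ge> 1) \<and> last ks \<ge> 2"

definition idx_of_pairs :: "(nat \<times> nat) list \<Rightarrow> nat list" where
  "idx_of_pairs ps = concat (map (\<lambda>(a, b). replicate a 1 @ [b + 2]) ps)"

text \<open>Dual index: if k = (1^{a_1}, b_1+2, ..., 1^{a_s}, b_s+2) (unique decomposition),
its dual is (1^{b_s}, a_s+2, ..., 1^{b_1}, a_1+2).\<close>
definition dual_index :: "nat list \<Rightarrow> nat list" where
  "dual_index ks = idx_of_pairs (rev (map prod.swap (THE ps. idx_of_pairs ps = ks)))"

definition incr_tuples :: "nat \<Rightarrow> nat list set" where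
  "incr_tuples n = {ms. length ms = n \<and> sorted_wrt (<) ms}"

definition Z_term :: "nat list \<Rightarrow> complex \<Rightarrow> complex \<Rightarrow> nat list \<Rightarrow> complex" where
  "Z_term ks \<alpha> \<beta> ms =
     pochhammer \<alpha> (hd ms) / fact (hd ms) * (fact (last ms) / pochhammer \<alpha> (last ms + 1))
     * (\<Prod>i<length ks - 1. 1 / (of_nat (ms ! i) + \<beta>) ^ (ks ! i))
     * (1 / (of_nat (last ms) + \<beta>) ^ (last ks - 1))"

definition Z :: "nat list \<Rightarrow> complex \<Rightarrow> complex \<Rightarrow> complex" where
  "Z ks \<alpha> \<beta> = (\<Sum>\<^sub>\<infinity> ms \<in> incr_tuples (length ks). Z_term ks \<alpha> \<beta> ms)"

end

theory Submission
  imports Defs "HOL-Real_Asymp.Real_Asymp"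
begin

definition Aw :: "'a::real_normed_field \<Rightarrow> nat \<Rightarrow> 'a" where
  "Aw x m = pochhammer x m / fact m"
definition Bw :: "'a::real_normed_field \<Rightarrow> nat \<Rightarrow> 'a" where
  "Bw x m = fact m / pochhammer x (Suc m)"
definition Cc :: "'a::real_normed_field \<Rightarrow> 'a \<Rightarrow> nat \<Rightarrow> nat \<Rightarrow> 'a" where
  "Cc x y m n = pochhammer (x+1) n * pochhammer (y+1) m / pochhammer (x+y+1) (m+n)"

lemma Cc_sym: "Cc y x n m = Cc x y m n"
  by (simp add: Cc_def add.commute add.left_commute mult.commute)

lemma poch_Re_nz: "Re (z::complex) > 0 \<Longrightarrow> pochhammer z n \<noteq> 0"
  by (auto simp: pochhammer_eq_0_iff)

lemma add_nat_Re_nz: "Re (z::complex) > 0 \<Longrightarrow> z + of_nat n \<noteq> 0"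
proof assume "z + of_nat n = 0" "Re z > 0" then have "Re (z + of_nat n) = 0" by simp thus False using \<open>Re z > 0\<close> by simp qed

lemma rGS_poch: "pochhammer z (Suc N) = rGamma_series z N * fact N * exp (z * of_real (ln (of_nat N)))"
  for z :: complex
  by (simp add: rGamma_series_def)

lemma norm_exp_ln: "norm (exp (w * of_real (ln (real N)))) = exp (Re w * ln (real N))"
  by (simp add: norm_exp_eq_Re)

lemma exp_ln_to_0: "Re w < 0 \<Longrightarrow> (\<lambda>N. exp (w * of_real (ln (real N)))) \<longlonglongrightarrow> (0::complex)"
proof -
  assume w: "Re w < 0"
  have "(\<lambda>N. exp (Re w * ln (real N))) \<longlonglongrightarrow> 0"
    using w by real_asymp
  then show ?thesis
    by (subst tendsto_norm_zero_iff[symmetric]) (simp add: norm_exp_eq_Re)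
qed


lemma poch_asym: "Re z > 0 \<Longrightarrow> pochhammer z N = rGamma_series z N * fact N * exp (z * of_real (ln (real N))) / (z + of_nat N)"
  for z :: complex
  using rGS_poch[of z N] add_nat_Re_nz[of z N] by (simp add: pochhammer_Suc field_simps)

lemma ratio_to_1: "Re z > 0 \<Longrightarrow> (\<lambda>N. (w + of_nat N) / (z + of_nat N :: complex)) \<longlonglongrightarrow> 1"
proof -
  assume z: "Re z > 0"
  have "(\<lambda>N. (w - z) / (z + of_nat N :: complex)) \<longlonglongrightarrow> 0"
    by (intro tendsto_divide_0[OF tendsto_const] tendsto_add_filterlim_at_infinity[OF tendsto_const tendsto_of_nat])
  hence "(\<lambda>N. 1 + (w - z) / (z + of_nat N :: complex)) \<longlonglongrightarrow> 1 + 0"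
    by (intro tendsto_add tendsto_const)
  moreover have "1 + (w - z) / (z + of_nat N) = (w + of_nat N) / (z + of_nat N)" for N
    using add_nat_Re_nz[OF z, of N] by (simp add: field_simps)
  ultimately show ?thesis by simp
qed

lemma rGS_nz: "Re z > 0 \<Longrightarrow> rGamma_series z N \<noteq> 0" for z :: complex
  using rGS_poch[of z N] poch_Re_nz[of z "Suc N"] by auto

lemma rGamma_Re_nz: "Re z > 0 \<Longrightarrow> rGamma z \<noteq> (0::complex)"
  by (auto simp: rGamma_eq_zero_iff elim!: nonpos_Ints_cases)

lemma poch_ratio_lim:
  fixes z w :: complex
  assumes z: "Re z > 0" and zw: "Re w > Re z"
  shows "(\<lambda>N. pochhammer z N / pochhammer w N) \<longlonglongrightarrow> 0"
proof -
  have w: "Re w > 0" using z zw by simp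
  define L where "L N = (of_real (ln (real N)) :: complex)" for N
  have eq: "pochhammer z N / pochhammer w N =
     rGamma_series z N / rGamma_series w N * exp ((z - w) * L N) * ((w + of_nat N) / (z + of_nat N))" for N
  proof -
    have e: "exp ((z - w) * L N) = exp (z * L N) / exp (w * L N)"
      by (simp add: exp_diff algebra_simps)
    have pz: "pochhammer z N = fact N * (rGamma_series z N * exp (z * L N) / (z + of_nat N))"
      unfolding poch_asym[OF z, of N] L_def by simp
    have pw: "pochhammer w N = fact N * (rGamma_series w N * exp (w * L N) / (w + of_nat N))"
      unfolding poch_asym[OF w, of N] L_def by simp
    show ?thesis
      unfolding e pz pw mult_divide_mult_cancel_left[OF fact_nonzero]
      using rGS_nz[OF w, of N] add_nat_Re_nz[OF z, of N] add_nat_Re_nz[OF w, of N]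
      by (simp add: field_simps)
  qed
  have "(\<lambda>N. rGamma_series z N / rGamma_series w N * exp ((z - w) * L N) * ((w + of_nat N) / (z + of_nat N)))
     \<longlonglongrightarrow> rGamma z / rGamma w * 0 * 1"
    unfolding L_def
    by (intro tendsto_mult tendsto_divide rGamma_series_LIMSEQ rGamma_Re_nz w exp_ln_to_0 ratio_to_1 z)
       (use zw in simp)
  then show ?thesis by (simp add: eq)
qed

lemma Cc_lim:
  fixes a b :: complex
  assumes a: "Re a > 0" and b: "Re b > 0"
  shows "(\<lambda>N. Cc a b m N) \<longlonglongrightarrow> 0"
proof -
  have eq: "Cc a b m N = pochhammer (b+1) m / pochhammer (a+b+1) m *
      (pochhammer (a+1) N / pochhammer (a+b+1 + of_nat m) N)" for N
    unfolding Cc_def pochhammer_product' by (simp add: field_simps)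
  have "(\<lambda>N. pochhammer (b+1) m / pochhammer (a+b+1) m *
      (pochhammer (a+1) N / pochhammer (a+b+1 + of_nat m) N)) \<longlonglongrightarrow> pochhammer (b+1) m / pochhammer (a+b+1) m * 0"
    by (intro tendsto_mult tendsto_const poch_ratio_lim) (use a b in auto)
  then show ?thesis by (simp add: eq)
qed


lemma Cc_Suc: "Cc x y m (Suc n) = Cc x y m n * (x + 1 + of_nat n) / (x + y + 1 + of_nat (m + n))"
  unfolding Cc_def by (simp add: pochhammer_Suc field_simps del: of_nat_add)

lemma Cc_Suc_m: "Cc x y (Suc m) n = Cc x y m n * (y + 1 + of_nat m) / (x + y + 1 + of_nat (m + n))"
  unfolding Cc_def by (simp add: pochhammer_Suc field_simps del: of_nat_add)

lemma Aw_Suc: "Aw x (Suc n) = Aw x n * (x + of_nat n) / (of_nat n + 1)"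
  unfolding Aw_def by (simp add: pochhammer_Suc field_simps)

lemma Aw_0 [simp]: "Aw x 0 = 1" by (simp add: Aw_def)
lemma Cc_0_0 [simp]: "Cc x y 0 0 = 1" by (simp add: Cc_def)

lemma T_sums:
  fixes a b :: complex
  assumes a: "Re a > 0" and b: "Re b > 0"
  shows "(\<lambda>j. Cc a b m (n + 1 + j) / (of_nat (n + 1 + j) + a)) sums (Cc a b m n / (of_nat m + b))"
proof -
  have mb: "of_nat m + b \<noteq> 0" using add_nat_Re_nz[OF b, of m] by (simp add: add.commute)
  have eq: "Cc a b m (n + 1 + j) / (of_nat (n + 1 + j) + a) =
        Cc a b m (n + j) / (of_nat m + b) - Cc a b m (Suc (n + j)) / (of_nat m + b)" for j
  proof -
    have d1: "a + b + 1 + of_nat (m + (n + j)) \<noteq> 0"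
      using add_nat_Re_nz[of "a+b+1" "m + (n+j)"] a b by simp
    have d2: "a + 1 + of_nat (n + j) \<noteq> 0"
      using add_nat_Re_nz[of "a+1" "n+j"] a by simp
    have d3: "of_nat (Suc (n + j)) + a = a + 1 + of_nat (n + j)" by simp
    have alg: "C * X / Y / X = C / D - C * X / Y / D"
      if "X \<noteq> 0" "Y \<noteq> 0" "D \<noteq> 0" "Y = X + D" for C X Y D :: complex
    proof -
      have "C / D - C * X / Y / D = C * (Y - X) / (Y * D)" using that(2,3) by (simp add: field_simps)
      also have "\<dots> = C / Y" using that by simp
      finally show ?thesis using that(1) by simp
    qed
    have "a + b + 1 + of_nat (m + (n + j)) = (a + 1 + of_nat (n + j)) + (of_nat m + b)" by simp
    note A = alg[OF d2 d1 mb this, of "Cc a b m (n + j)"]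
    have eqC: "Cc a b m (Suc (n + j)) = Cc a b m (n + j) * (a + 1 + of_nat (n + j)) / (a + b + 1 + of_nat (m + (n + j)))"
      by (rule Cc_Suc)
    have nj: "n + 1 + j = Suc (n + j)" by simp
    show ?thesis unfolding nj d3 eqC by (rule A)
  qed
  have lim: "(\<lambda>j. Cc a b m (n + j) / (of_nat m + b)) \<longlonglongrightarrow> 0 / (of_nat m + b)"
  proof (intro tendsto_divide tendsto_const)
    show "(\<lambda>j. Cc a b m (n + j)) \<longlonglongrightarrow> 0"
      using LIMSEQ_ignore_initial_segment[OF Cc_lim[OF a b, of m], of n] by (simp add: add.commute)
  qed (use mb in auto)
  have "(\<lambda>j. Cc a b m (n + j) / (of_nat m + b) - Cc a b m (n + Suc j) / (of_nat m + b)) sums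
     (Cc a b m (n + 0) / (of_nat m + b) - 0 / (of_nat m + b))"
    by (rule telescope_sums'[OF lim])
  then show ?thesis using eq by simp
qed


definition kap :: "'a::Gamma \<Rightarrow> 'a \<Rightarrow> 'a" where
  "kap x y = (x + y) / (x * y) * rGamma x * rGamma y / rGamma (x + y)"

definition Pk :: "'a::real_normed_field \<Rightarrow> 'a \<Rightarrow> nat \<Rightarrow> 'a" where
  "Pk x y N = pochhammer (x+1) N * pochhammer (y+1) N / (fact N * pochhammer (x+y+1) N)"

lemma kap_sym: "kap y x = kap x y"
  by (simp add: kap_def add.commute mult.commute)

lemma poch1_rGS: "z \<noteq> 0 \<Longrightarrow> pochhammer (z+1) N = rGamma_series z N * fact N * exp (z * of_real (ln (real N))) / z"
  for z :: complex
  using rGS_poch[of z N] by (simp add: pochhammer_rec field_simps)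

lemma Re_nz: "Re (z::complex) > 0 \<Longrightarrow> z \<noteq> 0" by auto

lemma Pk_lim:
  fixes a b :: complex
  assumes a: "Re a > 0" and b: "Re b > 0"
  shows "Pk a b \<longlonglongrightarrow> kap a b"
proof -
  have ab: "Re (a+b) > 0" using a b by simp
  define L where "L N = (of_real (ln (real N)) :: complex)" for N
  have eq: "Pk a b N = (a + b) / (a * b) * rGamma_series a N * rGamma_series b N / rGamma_series (a+b) N" for N
  proof -
    have E: "exp ((a + b) * L N) = exp (a * L N) * exp (b * L N)"
      by (simp add: exp_add[symmetric] algebra_simps)
    have alg: "(ra * f * ea / a) * (rb * f * eb / b) / (f * (rab * f * (ea * eb) / (a + b))) =
               (a + b) / (a * b) * ra * rb / rab"
      if "f \<noteq> 0" "ea \<noteq> 0" "eb \<noteq> 0" "a \<noteq> 0" "b \<noteq> 0" "a + b \<noteq> 0" "rab \<noteq> 0"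
      for ra rb rab f ea eb :: complex
      using that by (simp add: field_simps)
    show ?thesis
      unfolding Pk_def poch1_rGS[OF Re_nz[OF a]] poch1_rGS[OF Re_nz[OF b]]
      unfolding add.assoc[symmetric, of a b 1] poch1_rGS[OF Re_nz[OF ab]]
      unfolding L_def[symmetric] E
      by (rule alg) (use a b Re_nz[OF ab] rGS_nz[OF ab, of N] in auto)
  qed
  have "(\<lambda>N. (a + b) / (a * b) * rGamma_series a N * rGamma_series b N / rGamma_series (a+b) N)
      \<longlonglongrightarrow> (a + b) / (a * b) * rGamma a * rGamma b / rGamma (a+b)"
    by (intro tendsto_intros rGamma_Re_nz ab)
  moreover have "Pk a b = (\<lambda>N. (a + b) / (a * b) * rGamma_series a N * rGamma_series b N / rGamma_series (a+b) N)"
    using eq by auto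
  ultimately show ?thesis by (simp add: kap_def)
qed


lemma one_plus_of_nat_nz: "(1 + of_nat N :: 'a::{semiring_char_0}) \<noteq> 0"
  by (metis of_nat_Suc of_nat_neq_0 add.commute)

lemma B1_partial:
  fixes a b :: complex
  assumes a: "Re a > 0" and b: "Re b > 0"
  shows "(\<Sum>n<Suc N. Aw b n * Cc a b 0 n / (of_nat n + a)) = Pk a b N / a"
proof (induction N)
  case 0
  then show ?case by (simp add: Pk_def)
next
  case (Suc N)
  define P1 where "P1 = pochhammer (a+1) N"
  define P2 where "P2 = pochhammer (b+1) N"
  define P3 where "P3 = pochhammer (a+b+1) N"
  define F where "F = (fact N :: complex)"
  define n1 where "n1 = (of_nat (Suc N) :: complex)"
  have e1: "Pk a b (Suc N) = P1*(a+1+ of_nat N) * (P2*(b+1+ of_nat N)) / (n1 * F * (P3 * (a+b+1+ of_nat N)))"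
    unfolding Pk_def pochhammer_Suc P1_def P2_def P3_def F_def n1_def fact_Suc by simp
  have e2: "Aw b (Suc N) * Cc a b 0 (Suc N) / (of_nat (Suc N) + a) =
      (b*P2/(n1*F)) * (P1*(a+1+ of_nat N)/(P3*(a+b+1+ of_nat N))) / (a+1+ of_nat N)"
    unfolding Aw_def Cc_def pochhammer_rec[of b N] fact_Suc add_0
    unfolding pochhammer_Suc P1_def P2_def P3_def F_def n1_def using one_plus_of_nat_nz[of N, where 'a=complex] by (simp add: add_ac)
  have e3: "Pk a b N = P1 * P2 / (F * P3)" unfolding Pk_def P1_def P2_def P3_def F_def by simp
  have alg: "(P1*X*(P2*Y)/(n1*F*(P3*W)))/a = P1*P2/(F*P3)/a + (b*P2/(n1*F))*(P1*X/(P3*W))/X"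
    if "n1 \<noteq> 0" "F \<noteq> 0" "P3 \<noteq> 0" "W \<noteq> 0" "X \<noteq> 0" "a \<noteq> 0" "X = a + n1" "Y = b + n1" "W = a + b + n1"
    for X Y W :: complex
    using that(1-6) apply (simp add: field_simps)
    apply (simp add: that(7-9) algebra_simps)
    done
  have nz1: "n1 \<noteq> 0" unfolding n1_def by (rule of_nat_neq_0)
  have nz2: "F \<noteq> 0" by (simp add: F_def)
  have nz3: "P3 \<noteq> 0" unfolding P3_def by (rule poch_Re_nz) (use a b in simp)
  have nz4: "a+b+1+ of_nat N \<noteq> 0" using add_nat_Re_nz[of "a+b+1" N] a b by simp
  have nz5: "a+1+ of_nat N \<noteq> 0" using add_nat_Re_nz[of "a+1" N] a by simp
  have "Pk a b (Suc N) / a = Pk a b N / a + Aw b (Suc N) * Cc a b 0 (Suc N) / (of_nat (Suc N) + a)"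
    unfolding e1 e2 e3 by (rule alg[OF nz1 nz2 nz3 nz4 nz5 Re_nz[OF a]]) (simp_all add: n1_def)
  then show ?case using Suc.IH by simp
qed

lemma B1_base:
  fixes a b :: complex
  assumes a: "Re a > 0" and b: "Re b > 0"
  shows "(\<lambda>n. Aw b n * Cc a b 0 n / (of_nat n + a)) sums (kap a b * Bw a 0)"
proof -
  have "(\<lambda>N. Pk a b N / a) \<longlonglongrightarrow> kap a b / a"
    by (intro tendsto_divide Pk_lim a b tendsto_const) (use a in auto)
  hence "(\<lambda>N. \<Sum>n<Suc N. Aw b n * Cc a b 0 n / (of_nat n + a)) \<longlonglongrightarrow> kap a b / a"
    by (simp only: B1_partial[OF a b])
  hence "(\<lambda>N. \<Sum>n<N. Aw b n * Cc a b 0 n / (of_nat n + a)) \<longlonglongrightarrow> kap a b / a"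
    by (rule filterlim_sequentially_Suc[THEN iffD1])
  then show ?thesis by (simp add: sums_def Bw_def)
qed


lemma u_lim:
  fixes a b :: complex
  assumes a: "Re a > 0" and b: "Re b > 0"
  shows "(\<lambda>n. of_nat n * (Aw b n * Cc a b (Suc k) n) * (a + b + of_nat (Suc k) + of_nat n) /
            ((of_nat (Suc k) + b) * (a + of_nat n))) \<longlonglongrightarrow> 0"
proof -
  define mm where "mm = (of_nat (Suc k) :: complex)"
  define g where "g = a + b + mm"
  have g: "Re g > 0" using a b by (simp add: g_def mm_def)
  define L where "L n = (of_real (ln (real n)) :: complex)" for n
  define K where "K = pochhammer (b+1) (Suc k) / pochhammer (a+b+1) (Suc k)"
  define V where "V = mm + b"
  have V: "V \<noteq> 0" unfolding V_def mm_def using add_nat_Re_nz[OF b, of "Suc k"] by (simp add: add.commute)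
  have eq: "of_nat n * (Aw b n * Cc a b (Suc k) n) * (a + b + mm + of_nat n) / (V * (a + of_nat n)) =
      K * g / (a * V) * (rGamma_series b n * rGamma_series a n / rGamma_series g n) *
      exp (- mm * L n) * ((0 + of_nat n) / (b + of_nat n)) * ((g + of_nat n) / (a + of_nat n))" for n
  proof -
    have pb: "pochhammer b n = rGamma_series b n * fact n * exp (b * L n) / (b + of_nat n)"
      unfolding L_def by (rule poch_asym[OF b])
    have pa: "pochhammer (a+1) n = rGamma_series a n * fact n * exp (a * L n) / a"
      unfolding L_def by (rule poch1_rGS[OF Re_nz[OF a]])
    have pg: "pochhammer (g+1) n = rGamma_series g n * fact n * exp (g * L n) / g"
      unfolding L_def by (rule poch1_rGS[OF Re_nz[OF g]])
    have pp: "pochhammer (a+b+1) (Suc k + n) = pochhammer (a+b+1) (Suc k) * pochhammer (g+1) n"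
      unfolding pochhammer_product' g_def mm_def by (simp add: add_ac)
    have E: "exp (- mm * L n) = exp (b * L n) * exp (a * L n) / exp (g * L n)"
      unfolding g_def by (simp add: exp_add[symmetric] exp_diff[symmetric] algebra_simps)
    have alg: "nn * ((rb * f * Eb / Bn / f) * ((ra * f * Ea / a) * Pb / (Pab * (rg * f * Eg / g)))) * Wn / (V * Xn)
       = Pb / Pab * g / (a * V) * (rb * ra / rg) * (Eb * Ea / Eg) * (nn / Bn) * (Wn / Xn)"
      if "f \<noteq> 0" "Eg \<noteq> 0" "g \<noteq> 0" "a \<noteq> 0" "rg \<noteq> 0" "Pab \<noteq> 0" "Bn \<noteq> 0"
      for nn rb f Eb Bn ra Ea Pb Pab rg Eg Wn Xn :: complex
      using that by (simp add: field_simps)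
    have "Pab \<noteq> 0" if "Pab = pochhammer (a+b+1) (Suc k)" for Pab
      using that poch_Re_nz[of "a+b+1" "Suc k"] a b by simp
    show ?thesis
      unfolding Aw_def Cc_def pp pb pa pg E K_def
      apply (simp only: add_0_left)
      apply (subst alg)
      using rGS_nz[OF g, of n] Re_nz[OF g] Re_nz[OF a] poch_Re_nz[of "a+b+1" "Suc k"] a b
        add_nat_Re_nz[OF b, of n]
      by (auto simp: g_def)
  qed
  have lim: "(\<lambda>n. K * g / (a * V) * (rGamma_series b n * rGamma_series a n / rGamma_series g n) *
      exp (- mm * L n) * ((0 + of_nat n) / (b + of_nat n)) * ((g + of_nat n) / (a + of_nat n)))
      \<longlonglongrightarrow> K * g / (a * V) * (rGamma b * rGamma a / rGamma g) * 0 * 1 * 1"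
    unfolding L_def
    by (intro tendsto_mult tendsto_const tendsto_divide rGamma_series_LIMSEQ rGamma_Re_nz g
        exp_ln_to_0 ratio_to_1 a b) (simp add: mm_def)
  have "(\<lambda>n. of_nat n * (Aw b n * Cc a b (Suc k) n) * (a + b + mm + of_nat n) / (V * (a + of_nat n)))
     \<longlonglongrightarrow> 0"
    using lim by (simp only: eq) simp
  then show ?thesis by (simp add: mm_def V_def)
qed


lemma B1_step:
  fixes a b :: complex
  assumes a: "Re a > 0" and b: "Re b > 0"
  assumes IH: "(\<lambda>n. Aw b n * Cc a b k n / (of_nat n + a)) sums h"
  shows "(\<lambda>n. Aw b n * Cc a b (Suc k) n / (of_nat n + a)) sums (of_nat (Suc k) * h / (a + of_nat (Suc k)))"
proof -
  define mm where "mm = (of_nat (Suc k) :: complex)"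
  define V where "V = mm + b"
  have V: "V \<noteq> 0" unfolding V_def mm_def using add_nat_Re_nz[OF b, of "Suc k"] by (simp add: add.commute)
  have amm: "a + mm \<noteq> 0" unfolding mm_def using add_nat_Re_nz[OF a, of "Suc k"] .
  define u where "u n = of_nat n * (Aw b n * Cc a b (Suc k) n) * (a + b + mm + of_nat n) / (V * (a + of_nat n))" for n
  have key: "mm * (Aw b n * Cc a b k n / (of_nat n + a)) - (a + mm) * (Aw b n * Cc a b (Suc k) n / (of_nat n + a))
        = u n - u (Suc n)" for n
  proof -
    define A where "A = Aw b n"
    define C where "C = Cc a b (Suc k) n"
    define nn where "nn = (of_nat n :: complex)"
    define W where "W = a + b + mm + nn"
    define X1 where "X1 = a + nn"
    have X1: "X1 \<noteq> 0" unfolding X1_def nn_def by (rule add_nat_Re_nz[OF a])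
    have W: "W \<noteq> 0" unfolding W_def nn_def mm_def using add_nat_Re_nz[of "a+b" "Suc k + n"] a b by (simp add: add_ac)
    have hC: "Cc a b k n = C * W / V"
    proof -
      have "C = Cc a b k n * V / W"
        unfolding C_def Cc_Suc_m V_def W_def mm_def nn_def by (simp add: add_ac)
      thus ?thesis using V W by (simp add: field_simps)
    qed
    have hu: "u n = nn * (A * C) * W / (V * X1)" unfolding u_def A_def C_def nn_def W_def X1_def ..
    have hu': "u (Suc n) = A * (b + nn) * C / V"
    proof -
      define N1 where "N1 = (of_nat (Suc n) :: complex)"
      define X2 where "X2 = a + 1 + nn"
      define W2 where "W2 = a + b + 1 + of_nat (Suc k + n)"
      have N1: "N1 \<noteq> 0" unfolding N1_def by (rule of_nat_neq_0)
      have X2: "X2 \<noteq> 0" unfolding X2_def nn_def using add_nat_Re_nz[of "a+1" n] a by simp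
      have W2: "W2 \<noteq> 0" unfolding W2_def using add_nat_Re_nz[of "a+b+1" "Suc k + n"] a b by simp
      have e1: "Aw b (Suc n) = A * (b + nn) / N1" unfolding Aw_Suc A_def nn_def N1_def by (simp add: add_ac)
      have e2: "Cc a b (Suc k) (Suc n) = C * X2 / W2" unfolding Cc_Suc C_def X2_def W2_def nn_def ..
      have e3: "a + b + mm + of_nat (Suc n) = W2" unfolding W2_def mm_def by (simp add: add_ac)
      have e4: "a + of_nat (Suc n) = X2" unfolding X2_def nn_def by (simp add: add_ac)
      have "u (Suc n) = N1 * (A * (b + nn) / N1 * (C * X2 / W2)) * W2 / (V * X2)"
        unfolding u_def e1 e2 e3 e4 N1_def ..
      also have "\<dots> = A * (b + nn) * C / V" using N1 X2 W2 V by (simp add: field_simps)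
      finally show ?thesis .
    qed
    have lhs: "mm * (Aw b n * Cc a b k n / (of_nat n + a)) - (a + mm) * (Aw b n * Cc a b (Suc k) n / (of_nat n + a))
        = mm * (A * (C * W / V) / X1) - (a + mm) * (A * C / X1)"
      unfolding hC A_def C_def X1_def nn_def by (simp add: add.commute)
    have alg: "mm * (A * (C * W / V) / X1) - (a + mm) * (A * C / X1) = nn * (A * C) * W / (V * X1) - A * (b + nn) * C / V"
      if "V = mm + b" "W = a + b + mm + nn" "X1 = a + nn" "V \<noteq> 0" "X1 \<noteq> 0" for V W X1
      using that(4,5) apply (simp add: field_simps)
      apply (simp add: that(1-3) algebra_simps)
      done
    show ?thesis unfolding lhs hu hu' by (rule alg[OF V_def W_def X1_def V X1])
  qed
  have u0: "u 0 = 0" by (simp add: u_def)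
  have ulim: "u \<longlonglongrightarrow> 0"
    using u_lim[OF a b, of k] unfolding u_def V_def mm_def by simp
  have tel: "(\<lambda>n. u n - u (Suc n)) sums (u 0 - 0)" by (rule telescope_sums'[OF ulim])
  have "(\<lambda>n. (mm * (Aw b n * Cc a b k n / (of_nat n + a)) - (u n - u (Suc n))) / (a + mm)) sums ((mm * h - (u 0 - 0)) / (a + mm))"
    by (intro sums_divide sums_diff sums_mult IH tel)
  moreover have "(mm * (Aw b n * Cc a b k n / (of_nat n + a)) - (u n - u (Suc n))) / (a + mm) =
      Aw b n * Cc a b (Suc k) n / (of_nat n + a)" for n
  proof -
    have ab: "(mm * R - D) / (a + mm) = S" if "mm * R - (a + mm) * S = D" "a + mm \<noteq> 0" for R S D
      using that by (simp add: field_simps)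
    show ?thesis by (rule ab[OF key[of n] amm])
  qed
  ultimately show ?thesis using u0 by (simp add: mm_def)
qed

lemma Bw_Suc: "Bw a (Suc k) = Bw a k * of_nat (Suc k) / (a + of_nat (Suc k))"
  unfolding Bw_def by (simp add: pochhammer_Suc[of a "Suc k"] field_simps del: of_nat_Suc)

lemma B1_sums:
  fixes a b :: complex
  assumes a: "Re a > 0" and b: "Re b > 0"
  shows "(\<lambda>n. Aw b n * Cc a b m n / (of_nat n + a)) sums (kap a b * Bw a m)"
proof (induction m)
  case 0
  show ?case by (rule B1_base[OF a b])
next
  case (Suc k)
  from B1_step[OF a b Suc.IH] show ?case by (simp add: Bw_Suc mult_ac)
qed


section \<open>Majorants\<close>

lemma norm_poch_ge:
  fixes z :: complex
  assumes "Re z > 0"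
  shows "pochhammer (Re z) n \<le> norm (pochhammer z n)"
proof (induction n)
  case (Suc n)
  have "Re z + of_nat n \<le> norm (z + of_nat n)"
    using complex_Re_le_cmod[of "z + of_nat n"] by simp
  moreover have "0 \<le> pochhammer (Re z) n" using assms by (intro pochhammer_nonneg) simp
  moreover have "0 \<le> Re z + of_nat n" using assms by simp
  ultimately show ?case using Suc.IH by (simp add: pochhammer_Suc norm_mult mult_mono)
qed simp

definition KP :: "complex \<Rightarrow> real" where
  "KP z = exp ((Im z)^2 * (Re z + 1) / (2 * Re z) / Re z)"

lemma norm_add_nat_le:
  fixes z :: complex
  assumes a: "Re z > 0"
  defines "M \<equiv> (Im z)^2 * (Re z + 1) / (2 * Re z)"
  shows "norm (z + of_nat n) \<le> (Re z + of_nat n) * exp (M / (Re z + of_nat n) - M / (Re z + of_nat (Suc n)))"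
proof -
  define u where "u = Re z + of_nat n"
  define y where "y = Im z"
  have u: "u > 0" "u \<ge> Re z" using a by (auto simp: u_def)
  have nrm: "norm (z + of_nat n) = sqrt (u^2 + y^2)"
    by (simp add: cmod_def u_def y_def)
  have s1: "sqrt (u^2 + y^2) \<le> u + y^2 / (2*u)"
  proof -
    have "sqrt (u^2 + y^2) \<le> sqrt ((u + y^2/(2*u))^2)"
    proof (rule real_sqrt_le_mono)
      have "0 \<le> (y*y)*(y*y)" by simp
      then show "u^2 + y^2 \<le> (u + y^2/(2*u))^2"
        using u by (simp add: power2_eq_square field_simps)
    qed
    also have "\<dots> = u + y^2/(2*u)" using u by simp
    finally show ?thesis .
  qed
  have s2: "u + y^2 / (2*u) = u * (1 + y^2/(2*u^2))" using u by (simp add: field_simps power2_eq_square)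
  have s3: "y^2/(2*u^2) \<le> M / u - M / (u + 1)"
  proof -
    have "M / u - M / (u + 1) = M / (u * (u+1))" using u by (simp add: field_simps)
    also have "y^2/(2*u^2) \<le> M / (u * (u+1))"
    proof -
      have "y^2/(2*u^2) = y^2 / (2*u) * (1/u)" by (simp add: power2_eq_square)
      also have "\<dots> \<le> y^2 / (2*u) * ((Re z + 1) / (Re z * (u+1)))"
      proof (rule mult_left_mono)
        have le: "Re z * (u+1) \<le> u * (Re z + 1)" using u by (simp add: algebra_simps)
        have "1/u = (Re z + 1) / (u * (Re z + 1))" using u a by simp
        also have "\<dots> \<le> (Re z + 1) / (Re z * (u+1))"
          by (rule divide_left_mono[OF le]) (use u a in auto)
        finally show "1/u \<le> (Re z + 1) / (Re z * (u+1))" .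
      qed (use u in simp)
      also have "\<dots> = M / (u * (u+1))" unfolding M_def y_def using u a by (simp add: field_simps)
      finally show ?thesis .
    qed
    finally show ?thesis .
  qed
  have "1 + y^2/(2*u^2) \<le> exp (y^2/(2*u^2))" by (rule exp_ge_add_one_self[THEN order.trans[rotated]]) simp
  also have "\<dots> \<le> exp (M / u - M / (u + 1))" using s3 by simp
  finally have "u * (1 + y^2/(2*u^2)) \<le> u * exp (M / u - M / (u + 1))" using u by simp
  then show ?thesis using nrm s1 s2 by (simp add: u_def add_ac)
qed

lemma norm_poch_le:
  fixes z :: complex
  assumes a: "Re z > 0"
  shows "norm (pochhammer z n) \<le> KP z * pochhammer (Re z) n"
proof -
  define M where "M = (Im z)^2 * (Re z + 1) / (2 * Re z)"
  have M: "M \<ge> 0" using a by (simp add: M_def)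
  have "norm (pochhammer z n) \<le> exp (M / Re z - M / (Re z + of_nat n)) * pochhammer (Re z) n"
  proof (induction n)
    case (Suc n)
    have pn: "0 \<le> pochhammer (Re z) n" using a by (intro pochhammer_nonneg) simp
    have "norm (pochhammer z (Suc n)) = norm (pochhammer z n) * norm (z + of_nat n)"
      by (simp add: pochhammer_Suc norm_mult)
    also have "\<dots> \<le> (exp (M / Re z - M / (Re z + of_nat n)) * pochhammer (Re z) n) *
        ((Re z + of_nat n) * exp (M / (Re z + of_nat n) - M / (Re z + of_nat (Suc n))))"
      by (intro mult_mono Suc.IH norm_add_nat_le[OF a, folded M_def]) (use a pn in auto)
    also have "\<dots> = exp (M / Re z - M / (Re z + of_nat (Suc n))) * pochhammer (Re z) (Suc n)"
      by (simp add: pochhammer_Suc exp_add[symmetric] algebra_simps)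
    finally show ?case .
  qed simp
  also have "\<dots> \<le> KP z * pochhammer (Re z) n"
  proof (rule mult_right_mono)
    have "M / (Re z + of_nat n) \<ge> 0" using M a by simp
    hence "M / Re z - M / (Re z + of_nat n) \<le> M / Re z" by simp
    thus "exp (M / Re z - M / (Re z + of_nat n)) \<le> KP z" unfolding KP_def M_def by simp
  qed (use a in \<open>simp add: pochhammer_nonneg\<close>)
  finally show ?thesis .
qed

lemma KP_pos: "KP z > 0" by (simp add: KP_def)


lemma norm_Aw: "Re z > 0 \<Longrightarrow> norm (Aw z m) \<le> KP z * Aw (Re z) m"
  unfolding Aw_def using norm_poch_le[of z m]
  by (simp add: norm_divide divide_right_mono)

lemma norm_Bw: "Re z > 0 \<Longrightarrow> norm (Bw z m) \<le> Bw (Re z) m"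
proof -
  assume z: "Re z > 0"
  have "norm (Bw z m) = fact m / norm (pochhammer z (Suc m))"
    unfolding Bw_def norm_divide by simp
  also have "\<dots> \<le> fact m / pochhammer (Re z) (Suc m)"
    using norm_poch_ge[OF z, of "Suc m"] pochhammer_pos[of "Re z" "Suc m"] z
    by (intro divide_left_mono) (auto intro!: mult_pos_pos)
  finally show ?thesis by (simp add: Bw_def)
qed

lemma Aw_nonneg: "a > 0 \<Longrightarrow> Aw (a::real) m \<ge> 0" by (simp add: Aw_def pochhammer_nonneg)
lemma Bw_pos: "a > 0 \<Longrightarrow> Bw (a::real) m > 0" by (simp add: Bw_def pochhammer_pos)
lemma Cc_nonneg: "a > 0 \<Longrightarrow> b > 0 \<Longrightarrow> Cc (a::real) b m n \<ge> 0"
  by (simp add: Cc_def pochhammer_nonneg)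
lemma Cc_pos: "a > 0 \<Longrightarrow> b > 0 \<Longrightarrow> Cc (a::real) b m n > 0"
  by (simp add: Cc_def pochhammer_pos)

lemma norm_Cc:
  assumes x: "Re x > 0" and y: "Re y > 0"
  shows "norm (Cc x y m n) \<le> KP (x+1) * KP (y+1) * Cc (Re x) (Re y) m n"
proof -
  have d: "pochhammer (Re x + Re y + 1) (m+n) \<le> norm (pochhammer (x+y+1) (m+n))"
    using norm_poch_ge[of "x+y+1" "m+n"] x y by simp
  have dp: "0 < pochhammer (Re x + Re y + 1) (m+n)" using x y by (intro pochhammer_pos) simp
  have n1: "norm (pochhammer (x+1) n) \<le> KP (x+1) * pochhammer (Re x + 1) n"
    using norm_poch_le[of "x+1" n] x by simp
  have n2: "norm (pochhammer (y+1) m) \<le> KP (y+1) * pochhammer (Re y + 1) m"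
    using norm_poch_le[of "y+1" m] y by simp
  have "norm (Cc x y m n) = norm (pochhammer (x+1) n) * norm (pochhammer (y+1) m) / norm (pochhammer (x+y+1) (m+n))"
    by (simp add: Cc_def norm_mult norm_divide)
  also have "\<dots> \<le> (KP (x+1) * pochhammer (Re x + 1) n) * (KP (y+1) * pochhammer (Re y + 1) m) / pochhammer (Re x + Re y + 1) (m+n)"
    by (intro frac_le mult_mono n1 n2 d dp) (auto intro!: mult_nonneg_nonneg pochhammer_nonneg less_imp_le[OF KP_pos] simp: x y less_imp_le add_pos_pos)
  also have "\<dots> = KP (x+1) * KP (y+1) * Cc (Re x) (Re y) m n" by (simp add: Cc_def)
  finally show ?thesis .
qed

lemma norm_invpow: "Re b > 0 \<Longrightarrow> norm (1 / (of_nat m + b) ^ c) \<le> 1 / (of_nat m + Re b) ^ c"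
proof -
  assume b: "Re b > 0"
  have "of_nat m + Re b \<le> norm (of_nat m + b)" using complex_Re_le_cmod[of "of_nat m + b"] by simp
  hence "(of_nat m + Re b) ^ c \<le> norm (of_nat m + b) ^ c" by (intro power_mono) (use b in auto)
  moreover have "0 < (of_nat m + Re b) ^ c" using b by simp
  ultimately show ?thesis by (simp add: norm_divide norm_power divide_left_mono)
qed

lemma sums_to_has_sum_dom:
  fixes f :: "nat \<Rightarrow> complex" and g :: "nat \<Rightarrow> real"
  assumes "f sums s" "g summable_on UNIV" "\<And>n. norm (f n) \<le> g n"
  shows "(f has_sum s) UNIV"
proof -
  have "(\<lambda>n. norm (f n)) summable_on UNIV"
    by (rule summable_on_comparison_test[OF assms(2)]) (use assms(3) in auto)
  hence fs: "f summable_on UNIV" by (rule abs_summable_summable)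
  hence "(f has_sum infsum f UNIV) UNIV" by (rule has_sum_infsum)
  hence "f sums infsum f UNIV" by (rule has_sum_imp_sums)
  hence "infsum f UNIV = s" using assms(1) sums_unique2 by blast
  then show ?thesis using fs has_sum_infsum by fastforce
qed

lemma of_real_Aw: "of_real (Aw a m) = Aw (of_real a :: complex) m"
  by (simp add: Aw_def pochhammer_of_real)
lemma of_real_Bw: "of_real (Bw a m) = Bw (of_real a :: complex) m"
  by (simp add: Bw_def pochhammer_of_real)
lemma of_real_Cc: "of_real (Cc a b m n) = Cc (of_real a :: complex) (of_real b) m n"
  by (simp add: Cc_def pochhammer_of_real[symmetric])
lemma of_real_kap: "of_real (kap a b) = kap (of_real a :: complex) (of_real b)"
  by (simp add: kap_def rGamma_complex_of_real[symmetric])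
lemma of_real_Pk: "of_real (Pk a b N) = Pk (of_real a :: complex) (of_real b) N"
  by (simp add: Pk_def pochhammer_of_real[symmetric])

lemma kap_nz: "Re a > 0 \<Longrightarrow> Re b > 0 \<Longrightarrow> kap a b \<noteq> (0::complex)"
  unfolding kap_def using rGamma_Re_nz[of a] rGamma_Re_nz[of b] rGamma_Re_nz[of "a+b"] Re_nz[of a] Re_nz[of b] Re_nz[of "a+b"]
  by simp

lemma kap_pos:
  fixes a b :: real
  assumes a: "a > 0" and b: "b > 0"
  shows "kap a b > 0"
proof -
  have "(\<lambda>N. of_real (Pk a b N)) \<longlonglongrightarrow> (of_real (kap a b) :: complex)"
    unfolding of_real_Pk of_real_kap by (rule Pk_lim) (use a b in auto)
  hence "Pk a b \<longlonglongrightarrow> kap a b" by (simp add: tendsto_complex_of_real_iff)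
  moreover have "Pk a b N \<ge> 0" for N using a b by (simp add: Pk_def pochhammer_nonneg)
  ultimately have "kap a b \<ge> 0" by (simp add: LIMSEQ_le_const)
  moreover have "kap a b \<noteq> 0"
    using kap_nz[of "of_real a" "of_real b"] a b of_real_kap[of a b] by force
  ultimately show ?thesis by simp
qed

lemma T_sums_real:
  fixes a b :: real
  assumes a: "a > 0" and b: "b > 0"
  shows "(\<lambda>j. Cc a b m (n + 1 + j) / (of_nat (n + 1 + j) + a)) sums (Cc a b m n / (of_nat m + b))"
proof -
  have "(\<lambda>j. Cc (of_real a) (of_real b) m (n + 1 + j) / (of_nat (n + 1 + j) + of_real a)) sums
        (Cc (of_real a) (of_real b) m n / (of_nat m + (of_real b :: complex)))"
    by (rule T_sums) (use a b in auto)
  hence "(\<lambda>j. of_real (Cc a b m (n + 1 + j) / (of_nat (n + 1 + j) + a))) sums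
        (of_real (Cc a b m n / (of_nat m + b)) :: complex)"
    by (simp add: of_real_Cc)
  thus ?thesis by (simp only: sums_of_real_iff)
qed

lemma B1_sums_real:
  fixes a b :: real
  assumes a: "a > 0" and b: "b > 0"
  shows "(\<lambda>n. Aw b n * Cc a b m n / (of_nat n + a)) sums (kap a b * Bw a m)"
proof -
  have "(\<lambda>n. Aw (of_real b) n * Cc (of_real a) (of_real b) m n / (of_nat n + of_real a)) sums
        (kap (of_real a) (of_real b) * Bw (of_real a :: complex) m)"
    by (rule B1_sums) (use a b in auto)
  hence "(\<lambda>n. of_real (Aw b n * Cc a b m n / (of_nat n + a))) sums
        (of_real (kap a b * Bw a m) :: complex)"
    by (simp add: of_real_Cc of_real_Aw of_real_Bw of_real_kap)
  thus ?thesis by (simp only: sums_of_real_iff)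
qed

lemma HT_real:
  fixes a b :: real
  assumes a: "a > 0" and b: "b > 0"
  shows "((\<lambda>j. Cc a b m (n + 1 + j) / (of_nat (n + 1 + j) + a)) has_sum (Cc a b m n / (of_nat m + b))) UNIV"
  by (rule sums_nonneg_imp_has_sum[OF T_sums_real[OF a b]]) (use a b in \<open>simp add: Cc_nonneg\<close>)

lemma HB1_real:
  fixes a b :: real
  assumes a: "a > 0" and b: "b > 0"
  shows "((\<lambda>n. Aw b n * Cc a b m n / (of_nat n + a)) has_sum (kap a b * Bw a m)) UNIV"
  by (rule sums_nonneg_imp_has_sum[OF B1_sums_real[OF a b]]) (use a b in \<open>simp add: Cc_nonneg Aw_nonneg\<close>)

lemma norm_inv_add: "Re a > 0 \<Longrightarrow> norm (x / (of_nat N + a)) \<le> norm x / (of_nat N + Re a)"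
  for a x :: complex
proof -
  assume a: "Re a > 0"
  have "of_nat N + Re a \<le> norm (of_nat N + a)" using complex_Re_le_cmod[of "of_nat N + a"] by simp
  moreover have "of_nat N + Re a > 0" using a by simp
  ultimately show ?thesis unfolding norm_divide by (intro divide_left_mono) (auto intro!: mult_pos_pos)
qed

lemma HT_complex:
  fixes a b :: complex
  assumes a: "Re a > 0" and b: "Re b > 0"
  shows "((\<lambda>j. Cc a b m (n + 1 + j) / (of_nat (n + 1 + j) + a)) has_sum (Cc a b m n / (of_nat m + b))) UNIV"
proof (rule sums_to_has_sum_dom[OF T_sums[OF a b]])
  let ?K = "KP (a+1) * KP (b+1)"
  show "(\<lambda>j. ?K * (Cc (Re a) (Re b) m (n + 1 + j) / (of_nat (n + 1 + j) + Re a))) summable_on UNIV"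
    by (intro summable_on_cmult_right has_sum_imp_summable[OF HT_real]) (use a b in auto)
  fix j
  have "norm (Cc a b m (n + 1 + j) / (of_nat (n + 1 + j) + a)) \<le> norm (Cc a b m (n + 1 + j)) / (of_nat (n + 1 + j) + Re a)"
    by (rule norm_inv_add[OF a])
  also have "\<dots> \<le> ?K * Cc (Re a) (Re b) m (n + 1 + j) / (of_nat (n + 1 + j) + Re a)"
    by (intro divide_right_mono norm_Cc a b) (use a in auto)
  finally show "norm (Cc a b m (n + 1 + j) / (of_nat (n + 1 + j) + a)) \<le> ?K * (Cc (Re a) (Re b) m (n + 1 + j) / (of_nat (n + 1 + j) + Re a))"
    by simp
qed

lemma HB1_complex:
  fixes a b :: complex
  assumes a: "Re a > 0" and b: "Re b > 0"
  shows "((\<lambda>n. Aw b n * Cc a b m n / (of_nat n + a)) has_sum (kap a b * Bw a m)) UNIV"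
proof (rule sums_to_has_sum_dom[OF B1_sums[OF a b]])
  let ?K = "KP b * (KP (a+1) * KP (b+1))"
  show "(\<lambda>n. ?K * (Aw (Re b) n * Cc (Re a) (Re b) m n / (of_nat n + Re a))) summable_on UNIV"
    by (intro summable_on_cmult_right has_sum_imp_summable[OF HB1_real]) (use a b in auto)
  fix n
  have "norm (Aw b n * Cc a b m n / (of_nat n + a)) \<le> norm (Aw b n * Cc a b m n) / (of_nat n + Re a)"
    by (rule norm_inv_add[OF a])
  also have "\<dots> \<le> (KP b * Aw (Re b) n) * (KP (a+1) * KP (b+1) * Cc (Re a) (Re b) m n) / (of_nat n + Re a)"
    unfolding norm_mult
    by (intro divide_right_mono mult_mono norm_Cc norm_Aw a b)
       (use a b in \<open>auto intro!: mult_nonneg_nonneg Aw_nonneg less_imp_le[OF KP_pos]\<close>)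
  finally show "norm (Aw b n * Cc a b m n / (of_nat n + a)) \<le> ?K * (Aw (Re b) n * Cc (Re a) (Re b) m n / (of_nat n + Re a))"
    by (simp add: mult_ac)
qed


fun lf :: "'a::real_normed_field \<Rightarrow> 'a \<Rightarrow> nat list \<Rightarrow> nat \<Rightarrow> 'a" where
  "lf x y [] m = 0"
| "lf x y [c] m = Aw x m / (of_nat m + y) ^ c"
| "lf x y (c # d # ds) m = (\<Sum>i<m. lf x y (d # ds) i) / (of_nat m + y) ^ c"

lemma lf_Suc: "lf x y (Suc c # ds) m = lf x y (c # ds) m / (of_nat m + y)"
  by (cases ds) (simp_all add: divide_divide_eq_left mult.commute)

lemma lf_one: "lf x y (1 # d # ds) m = (\<Sum>i<m. lf x y (d # ds) i) / (of_nat m + y)"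
  by simp

lemma lf_nonneg: "a > 0 \<Longrightarrow> b > 0 \<Longrightarrow> lf (a::real) b ks m \<ge> 0"
  by (induction a b ks m rule: lf.induct) (auto simp: Aw_nonneg intro!: sum_nonneg divide_nonneg_nonneg)

lemma norm_lf:
  assumes a: "Re a > 0" and b: "Re b > 0"
  shows "norm (lf a b ks m) \<le> KP a * lf (Re a) (Re b) ks m"
proof (induction ks arbitrary: m rule: induct_list012)
  case 1 then show ?case by simp
next
  case (2 c)
  have "norm (lf a b [c] m) = norm (Aw a m) * norm (1 / (of_nat m + b) ^ c)"
    by (simp add: norm_mult norm_divide)
  also have "\<dots> \<le> (KP a * Aw (Re a) m) * (1 / (of_nat m + Re b) ^ c)"
    by (intro mult_mono norm_Aw norm_invpow a b) (use a in \<open>auto intro!: mult_nonneg_nonneg Aw_nonneg less_imp_le[OF KP_pos]\<close>)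
  also have "\<dots> = KP a * lf (Re a) (Re b) [c] m"
    by (simp only: lf.simps times_divide_eq_right mult_1_right mult.assoc)
  finally show ?case .
next
  case (3 c d ds)
  have "norm (lf a b (c # d # ds) m) = norm (\<Sum>i<m. lf a b (d # ds) i) * norm (1 / (of_nat m + b) ^ c)"
    by (simp add: norm_mult norm_divide)
  also have "\<dots> \<le> (\<Sum>i<m. KP a * lf (Re a) (Re b) (d # ds) i) * (1 / (of_nat m + Re b) ^ c)"
  proof (intro mult_mono norm_invpow b)
    show "norm (\<Sum>i<m. lf a b (d # ds) i) \<le> (\<Sum>i<m. KP a * lf (Re a) (Re b) (d # ds) i)"
      by (rule order.trans[OF norm_sum sum_mono]) (rule "3.IH")
  qed (use a b in \<open>auto intro!: sum_nonneg mult_nonneg_nonneg lf_nonneg less_imp_le[OF KP_pos]\<close>)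
  also have "\<dots> = KP a * lf (Re a) (Re b) (c # d # ds) m" by (simp add: sum_distrib_left)
  finally show ?case .
qed


lemma sigma_iff_real:
  fixes h :: "'a \<times> 'b \<Rightarrow> real"
  assumes inner: "\<And>x. x \<in> A \<Longrightarrow> ((\<lambda>y. h (x, y)) has_sum s x) (B x)"
  assumes nn: "\<And>x y. x \<in> A \<Longrightarrow> y \<in> B x \<Longrightarrow> h (x, y) \<ge> 0"
  shows "h summable_on Sigma A B \<longleftrightarrow> s summable_on A"
proof
  assume "h summable_on Sigma A B"
  hence 1: "(\<lambda>x. infsum (\<lambda>y. h (x, y)) (B x)) summable_on A"
  proof (rule summable_on_SigmaD)
    fix x assume "x \<in> A"
    show "(\<lambda>y. h (x, y)) summable_on B x" by (rule has_sum_imp_summable[OF inner[OF \<open>x \<in> A\<close>]])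
  qed
  have 2: "(\<lambda>x. infsum (\<lambda>y. h (x, y)) (B x)) summable_on A \<longleftrightarrow> s summable_on A"
  proof (rule summable_on_cong)
    fix x assume "x \<in> A"
    show "infsum (\<lambda>y. h (x, y)) (B x) = s x" by (rule infsumI[OF inner[OF \<open>x \<in> A\<close>]])
  qed
  from 1 2 show "s summable_on A" by blast
next
  assume s: "s summable_on A"
  show "h summable_on Sigma A B"
  proof (rule summable_on_SigmaI[OF inner s])
    fix x y assume "x \<in> A" "y \<in> B x" then show "h (x, y) \<ge> 0" by (rule nn)
  qed
qed

lemma sigma_eq_banach:
  fixes h :: "'a \<times> 'b \<Rightarrow> 'c::banach"
  assumes sm: "h summable_on Sigma A B"
  assumes inner: "\<And>x. x \<in> A \<Longrightarrow> ((\<lambda>y. h (x, y)) has_sum s x) (B x)"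
  shows "infsum h (Sigma A B) = infsum s A"
proof -
  have "infsum h (Sigma A B) = infsum (\<lambda>x. infsum (\<lambda>y. h (x, y)) (B x)) A"
    by (rule infsum_Sigma_banach[OF sm, symmetric])
  also have "\<dots> = infsum s A"
  proof (rule infsum_cong)
    fix x assume "x \<in> A"
    show "infsum (\<lambda>y. h (x, y)) (B x) = s x" by (rule infsumI[OF inner[OF \<open>x \<in> A\<close>]])
  qed
  finally show ?thesis .
qed

lemma dom_summable:
  fixes F :: "'a \<Rightarrow> 'c::banach" and G :: "'a \<Rightarrow> real"
  assumes "G summable_on A" "\<And>x. x \<in> A \<Longrightarrow> norm (F x) \<le> c * G x"
  shows "F summable_on A"
proof -
  have "(\<lambda>x. c * G x) summable_on A" by (rule summable_on_cmult_right[OF assms(1)])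
  hence "(\<lambda>x. norm (F x)) summable_on A"
    by (rule summable_on_comparison_test) (use assms(2) in auto)
  then show ?thesis by (rule abs_summable_summable)
qed

definition LTm :: "'a::Gamma \<Rightarrow> 'a \<Rightarrow> nat list \<Rightarrow> nat \<Rightarrow> 'a" where
  "LTm x y k m = lf x y (rev k) m * (of_nat m + y) * (kap x y * Bw x m)"

definition PT :: "'a::Gamma \<Rightarrow> 'a \<Rightarrow> nat list \<Rightarrow> nat list \<Rightarrow> nat \<times> nat \<Rightarrow> 'a" where
  "PT x y k l p = lf x y (rev k) (fst p) * Cc x y (fst p) (snd p) * lf y x (rev l) (snd p)"

definition CS :: "complex \<Rightarrow> complex \<Rightarrow> nat list \<Rightarrow> nat list \<Rightarrow> complex" where
  "CS x y k l = (if l = [] then infsum (LTm x y k) UNIV else if k = [] then infsum (LTm y x l) UNIV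
                 else infsum (PT x y k l) UNIV)"

definition SS :: "real \<Rightarrow> real \<Rightarrow> nat list \<Rightarrow> nat list \<Rightarrow> bool" where
  "SS x y k l = (if l = [] then LTm x y k summable_on UNIV else if k = [] then LTm y x l summable_on UNIV
                 else PT x y k l summable_on UNIV)"

lemma LTm_nil: "LTm x y [] = (\<lambda>_. 0)"
  by (auto simp: LTm_def)

lemma bij_swap_UNIV: "bij_betw prod.swap (UNIV :: ('a \<times> 'b) set) UNIV"
  by (rule bij_betwI[of _ _ _ prod.swap]) auto

lemma PT_swap: "PT y x l k (prod.swap p) = PT x y k l p"
  by (simp add: PT_def Cc_sym mult_ac)

lemma CS_sym: "CS x y k l = CS y x l k"
proof -
  have "infsum (PT y x l k) UNIV = infsum (PT x y k l) UNIV"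
    using infsum_reindex_bij_betw[OF bij_swap_UNIV, of "PT y x l k"] by (simp add: PT_swap)
  then show ?thesis by (simp add: CS_def LTm_nil)
qed

lemma SS_sym: "SS x y k l = SS y x l k"
proof -
  have "PT y x l k summable_on UNIV \<longleftrightarrow> PT x y k l summable_on UNIV"
    using summable_on_reindex_bij_betw[OF bij_swap_UNIV, of "PT y x l k"] by (simp add: PT_swap)
  then show ?thesis by (simp add: SS_def LTm_nil)
qed

lemma LTm_Suc: "of_nat m + y \<noteq> 0 \<Longrightarrow> LTm x y (K @ [Suc c]) m = lf x y (c # rev K) m * (kap x y * Bw x m)"
  by (simp add: LTm_def lf_Suc)

lemma LTm_real_nonneg: "a > 0 \<Longrightarrow> b > 0 \<Longrightarrow> LTm (a::real) b k m \<ge> 0"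
  unfolding LTm_def using kap_pos[of a b] Bw_pos[of a m] lf_nonneg[of a b "rev k" m]
  by (intro mult_nonneg_nonneg) auto

lemma PT_real_nonneg: "a > 0 \<Longrightarrow> b > 0 \<Longrightarrow> PT (a::real) b k l p \<ge> 0"
  unfolding PT_def using lf_nonneg Cc_nonneg by (intro mult_nonneg_nonneg) auto

lemma norm_PT:
  assumes a: "Re a > 0" and b: "Re b > 0"
  shows "norm (PT a b k l p) \<le> (KP a * KP b * (KP (a+1) * KP (b+1))) * PT (Re a) (Re b) k l p"
proof -
  have "norm (PT a b k l p) = norm (lf a b (rev k) (fst p)) * norm (Cc a b (fst p) (snd p)) * norm (lf b a (rev l) (snd p))"
    by (simp add: PT_def norm_mult)
  also have "\<dots> \<le> (KP a * lf (Re a) (Re b) (rev k) (fst p)) * (KP (a+1) * KP (b+1) * Cc (Re a) (Re b) (fst p) (snd p))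
       * (KP b * lf (Re b) (Re a) (rev l) (snd p))"
    by (intro mult_mono norm_lf norm_Cc a b)
       (use a b in \<open>auto intro!: mult_nonneg_nonneg lf_nonneg Cc_nonneg less_imp_le[OF KP_pos]\<close>)
  also have "\<dots> = (KP a * KP b * (KP (a+1) * KP (b+1))) * PT (Re a) (Re b) k l p"
    by (simp add: PT_def mult_ac)
  finally show ?thesis .
qed

lemma norm_LTm_Suc:
  assumes a: "Re a > 0" and b: "Re b > 0"
  shows "norm (LTm a b (K @ [Suc c]) m) \<le> (KP a * norm (kap a b) / kap (Re a) (Re b)) * LTm (Re a) (Re b) (K @ [Suc c]) m"
proof -
  have nz: "of_nat m + b \<noteq> 0" using add_nat_Re_nz[OF b, of m] by (simp add: add.commute)
  have nzr: "of_nat m + Re b \<noteq> 0" using b by simp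
  have kp: "kap (Re a) (Re b) > 0" using kap_pos a b by auto
  have "norm (LTm a b (K @ [Suc c]) m) = norm (lf a b (c # rev K) m) * norm (kap a b) * norm (Bw a m)"
    unfolding LTm_Suc[OF nz] by (simp add: norm_mult)
  also have "\<dots> \<le> (KP a * lf (Re a) (Re b) (c # rev K) m) * norm (kap a b) * Bw (Re a) m"
    by (intro mult_mono norm_lf norm_Bw a b) (use a b in \<open>auto intro!: mult_nonneg_nonneg lf_nonneg less_imp_le[OF KP_pos]\<close>)
  also have "\<dots> = (KP a * norm (kap a b) / kap (Re a) (Re b)) * LTm (Re a) (Re b) (K @ [Suc c]) m"
    unfolding LTm_Suc[OF nzr] using kp by (simp add: field_simps)
  finally show ?thesis .
qed


lemma UNIV_Sigma: "(UNIV :: ('a \<times> 'b) set) = Sigma UNIV (\<lambda>_. UNIV)" by auto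

lemma PT_one_eq: "PT x y (K @ [c]) [1] (m, n) = lf x y (c # rev K) m * (Aw y n * Cc x y m n / (of_nat n + x))"
  by (simp add: PT_def)

lemma Ti_nil_real:
  fixes a b :: real
  assumes a: "a > 0" and b: "b > 0"
  shows "SS a b (K @ [Suc c]) [] \<longleftrightarrow> SS a b (K @ [c]) [1]"
proof -
  define f where "f m = lf a b (c # rev K) m" for m
  have inner: "((\<lambda>n. PT a b (K @ [c]) [1] (m, n)) has_sum (f m * (kap a b * Bw a m))) UNIV" for m
    unfolding PT_one_eq f_def by (intro has_sum_cmult_right HB1_real a b)
  have "PT a b (K @ [c]) [1] summable_on Sigma UNIV (\<lambda>_. UNIV) \<longleftrightarrow> (\<lambda>m. f m * (kap a b * Bw a m)) summable_on UNIV"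
    by (rule sigma_iff_real[OF inner]) (use a b PT_real_nonneg in auto)
  moreover have "LTm a b (K @ [Suc c]) = (\<lambda>m. f m * (kap a b * Bw a m))"
    unfolding f_def by (rule ext, rule LTm_Suc) (use b in \<open>simp add: add_pos_pos\<close>)
  ultimately show ?thesis unfolding SS_def UNIV_Sigma[symmetric] by simp
qed

lemma Ti_nil:
  fixes a b :: complex
  assumes a: "Re a > 0" and b: "Re b > 0"
  assumes ss: "SS (Re a) (Re b) (K @ [Suc c]) []"
  shows "CS a b (K @ [Suc c]) [] = CS a b (K @ [c]) [1]"
proof -
  have ssr: "SS (Re a) (Re b) (K @ [c]) [1]" using Ti_nil_real[of "Re a" "Re b" K c] ss a b by simp
  hence "PT (Re a) (Re b) (K @ [c]) [1] summable_on UNIV" by (simp add: SS_def)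
  hence sm: "PT a b (K @ [c]) [1] summable_on Sigma UNIV (\<lambda>_. UNIV)"
    unfolding UNIV_Sigma[symmetric] by (rule dom_summable) (rule norm_PT[OF a b])
  define f where "f m = lf a b (c # rev K) m" for m
  have inner: "((\<lambda>n. PT a b (K @ [c]) [1] (m, n)) has_sum (f m * (kap a b * Bw a m))) UNIV" for m
    unfolding PT_one_eq f_def by (intro has_sum_cmult_right HB1_complex a b)
  have "infsum (PT a b (K @ [c]) [1]) UNIV = infsum (\<lambda>m. f m * (kap a b * Bw a m)) UNIV"
    unfolding UNIV_Sigma[of] by (rule sigma_eq_banach[OF sm inner])
  moreover have "LTm a b (K @ [Suc c]) = (\<lambda>m. f m * (kap a b * Bw a m))"
    unfolding f_def by (rule ext, rule LTm_Suc) (use add_nat_Re_nz[OF b] in \<open>simp add: add.commute\<close>)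
  ultimately show ?thesis by (simp add: CS_def)
qed

definition hh :: "'a::real_normed_field \<Rightarrow> 'a \<Rightarrow> nat list \<Rightarrow> nat \<Rightarrow> nat list \<Rightarrow> (nat \<times> nat) \<times> nat \<Rightarrow> 'a" where
  "hh x y K c l q = lf x y (c # rev K) (fst (fst q)) * lf y x (rev l) (snd (fst q)) *
     (Cc x y (fst (fst q)) (snd (fst q) + 1 + snd q) / (of_nat (snd (fst q) + 1 + snd q) + x))"

definition hh2 :: "'a::real_normed_field \<Rightarrow> 'a \<Rightarrow> nat list \<Rightarrow> nat \<Rightarrow> nat list \<Rightarrow> (nat \<times> nat) \<times> nat \<Rightarrow> 'a" where
  "hh2 x y K c l q = lf x y (c # rev K) (fst (fst q)) * lf y x (rev l) (snd q) *
     (Cc x y (fst (fst q)) (snd (fst q)) / (of_nat (snd (fst q)) + x))"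

definition rho :: "(nat \<times> nat) \<times> nat \<Rightarrow> (nat \<times> nat) \<times> nat" where
  "rho q = ((fst (fst q), snd (fst q) + 1 + snd q), snd (fst q))"

definition Sp :: "((nat \<times> nat) \<times> nat) set" where
  "Sp = Sigma UNIV (\<lambda>p. {..<snd p})"

lemma bij_rho: "bij_betw rho UNIV Sp"
proof (rule bij_betwI[of _ _ _ "\<lambda>q. ((fst (fst q), snd q), snd (fst q) - snd q - 1)"])
  show "rho \<in> UNIV \<rightarrow> Sp" by (auto simp: rho_def Sp_def)
  show "(\<lambda>q. ((fst (fst q), snd q), snd (fst q) - snd q - 1)) \<in> Sp \<rightarrow> UNIV" by auto
  show "((fst (fst (rho x)), snd (rho x)), snd (fst (rho x)) - snd (rho x) - 1) = x" for x
    by (auto simp: rho_def)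
  show "rho ((fst (fst y), snd y), snd (fst y) - snd y - 1) = y" if "y \<in> Sp" for y
    using that by (auto simp: rho_def Sp_def)
qed

lemma PT_Suc_eq: "PT x y (K @ [Suc c]) l (m, n) = lf x y (c # rev K) m / (of_nat m + y) * Cc x y m n * lf y x (rev l) n"
  by (simp add: PT_def lf_Suc)

lemma PT_one_app: "l \<noteq> [] \<Longrightarrow> PT x y (K @ [c]) (l @ [1]) (m, n) =
    lf x y (c # rev K) m * Cc x y m n * ((\<Sum>i<n. lf y x (rev l) i) / (of_nat n + x))"
  by (cases "rev l") (auto simp: PT_def)

lemma hh_hh2: "hh x y K c l q = hh2 x y K c l (rho q)"
  by (simp add: hh_def hh2_def rho_def)

lemma hh2_sum: "l \<noteq> [] \<Longrightarrow> ((\<lambda>n. hh2 x y K c l (q, n)) has_sum PT x y (K @ [c]) (l @ [1]) q) {..<snd q}"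
proof -
  assume l: "l \<noteq> []"
  obtain m n' where q: "q = (m, n')" by (cases q)
  have "(\<Sum>n<n'. hh2 x y K c l ((m, n'), n)) = PT x y (K @ [c]) (l @ [1]) (m, n')"
    unfolding PT_one_app[OF l] hh2_def by (simp add: sum_distrib_left sum_distrib_right sum_divide_distrib mult_ac)
  then show ?thesis using q by (auto intro: has_sum_finiteI)
qed

lemma hh_inner_real:
  fixes a b :: real
  assumes a: "a > 0" and b: "b > 0"
  shows "((\<lambda>j. hh a b K c l (p, j)) has_sum PT a b (K @ [Suc c]) l p) UNIV"
proof -
  obtain m n where p: "p = (m, n)" by (cases p)
  have "((\<lambda>j. (lf a b (c # rev K) m * lf b a (rev l) n) * (Cc a b m (n + 1 + j) / (of_nat (n + 1 + j) + a))) has_sum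
     ((lf a b (c # rev K) m * lf b a (rev l) n) * (Cc a b m n / (of_nat m + b)))) UNIV"
    by (intro has_sum_cmult_right HT_real a b)
  moreover have "((lf a b (c # rev K) m * lf b a (rev l) n) * (Cc a b m n / (of_nat m + b))) = PT a b (K @ [Suc c]) l (m, n)"
    unfolding PT_Suc_eq by (simp add: mult_ac)
  ultimately show ?thesis unfolding p hh_def by simp
qed

lemma hh_inner_complex:
  fixes a b :: complex
  assumes a: "Re a > 0" and b: "Re b > 0"
  shows "((\<lambda>j. hh a b K c l (p, j)) has_sum PT a b (K @ [Suc c]) l p) UNIV"
proof -
  obtain m n where p: "p = (m, n)" by (cases p)
  have "((\<lambda>j. (lf a b (c # rev K) m * lf b a (rev l) n) * (Cc a b m (n + 1 + j) / (of_nat (n + 1 + j) + a))) has_sum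
     ((lf a b (c # rev K) m * lf b a (rev l) n) * (Cc a b m n / (of_nat m + b)))) UNIV"
    by (intro has_sum_cmult_right HT_complex a b)
  moreover have "((lf a b (c # rev K) m * lf b a (rev l) n) * (Cc a b m n / (of_nat m + b))) = PT a b (K @ [Suc c]) l (m, n)"
    unfolding PT_Suc_eq by (simp add: mult_ac)
  ultimately show ?thesis unfolding p hh_def by simp
qed


lemma hh_nonneg: "a > 0 \<Longrightarrow> b > 0 \<Longrightarrow> hh (a::real) b K c l q \<ge> 0"
  unfolding hh_def by (intro mult_nonneg_nonneg divide_nonneg_nonneg lf_nonneg Cc_nonneg) auto

lemma hh2_nonneg: "a > 0 \<Longrightarrow> b > 0 \<Longrightarrow> hh2 (a::real) b K c l q \<ge> 0"
  unfolding hh2_def by (intro mult_nonneg_nonneg divide_nonneg_nonneg lf_nonneg Cc_nonneg) auto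

lemma norm_hh:
  assumes a: "Re a > 0" and b: "Re b > 0"
  shows "norm (hh a b K c l q) \<le> (KP a * KP b * (KP (a+1) * KP (b+1))) * hh (Re a) (Re b) K c l q"
proof -
  define m where "m = fst (fst q)"
  define n where "n = snd (fst q)"
  define N where "N = n + 1 + snd q"
  have "norm (hh a b K c l q) = norm (lf a b (c # rev K) m) * norm (lf b a (rev l) n) * norm (Cc a b m N / (of_nat N + a))"
    unfolding hh_def m_def[symmetric] n_def[symmetric] N_def[symmetric] norm_mult ..
  also have "\<dots> \<le> (KP a * lf (Re a) (Re b) (c # rev K) m) * (KP b * lf (Re b) (Re a) (rev l) n) *
      ((KP (a+1) * KP (b+1)) * Cc (Re a) (Re b) m N / (of_nat N + Re a))"
  proof (intro mult_mono norm_lf a b)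
    have "norm (Cc a b m N / (of_nat N + a)) \<le> norm (Cc a b m N) / (of_nat N + Re a)" by (rule norm_inv_add[OF a])
    also have "\<dots> \<le> (KP (a+1) * KP (b+1)) * Cc (Re a) (Re b) m N / (of_nat N + Re a)"
      by (intro divide_right_mono norm_Cc a b) (use a in auto)
    finally show "norm (Cc a b m N / (of_nat N + a)) \<le> (KP (a+1) * KP (b+1)) * Cc (Re a) (Re b) m N / (of_nat N + Re a)" .
  qed (use a b in \<open>auto intro!: mult_nonneg_nonneg divide_nonneg_nonneg lf_nonneg Cc_nonneg less_imp_le[OF KP_pos]\<close>)
  also have "\<dots> = (KP a * KP b * (KP (a+1) * KP (b+1))) * hh (Re a) (Re b) K c l q"
    by (simp add: hh_def m_def n_def N_def mult_ac)
  finally show ?thesis .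
qed

lemma Ti_cons_real:
  fixes a b :: real
  assumes a: "a > 0" and b: "b > 0" and l: "l \<noteq> []"
  shows "SS a b (K @ [Suc c]) l \<longleftrightarrow> SS a b (K @ [c]) (l @ [1])"
proof -
  have s1: "hh a b K c l summable_on Sigma UNIV (\<lambda>_. UNIV) \<longleftrightarrow> PT a b (K @ [Suc c]) l summable_on UNIV"
    by (rule sigma_iff_real[OF hh_inner_real[OF a b]]) (use a b hh_nonneg in auto)
  have s2: "hh a b K c l summable_on UNIV \<longleftrightarrow> hh2 a b K c l summable_on Sp"
    using summable_on_reindex_bij_betw[OF bij_rho, of "hh2 a b K c l"] by (simp add: hh_hh2[abs_def])
  have s3: "hh2 a b K c l summable_on Sp \<longleftrightarrow> PT a b (K @ [c]) (l @ [1]) summable_on UNIV"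
    unfolding Sp_def by (rule sigma_iff_real[OF hh2_sum[OF l]]) (use a b hh2_nonneg in auto)
  show ?thesis using s1 s2 s3 l unfolding SS_def UNIV_Sigma[symmetric] by simp
qed

lemma Ti_cons:
  fixes a b :: complex
  assumes a: "Re a > 0" and b: "Re b > 0" and l: "l \<noteq> []"
  assumes ss: "SS (Re a) (Re b) (K @ [Suc c]) l"
  shows "CS a b (K @ [Suc c]) l = CS a b (K @ [c]) (l @ [1])"
proof -
  have ar: "Re a > 0" and br: "Re b > 0" using a b by auto
  have "hh (Re a) (Re b) K c l summable_on Sigma UNIV (\<lambda>_. UNIV)"
    by (subst sigma_iff_real[OF hh_inner_real[OF ar br]]) (use ar br hh_nonneg ss l in \<open>auto simp: SS_def\<close>)
  hence sm1: "hh a b K c l summable_on UNIV"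
    unfolding UNIV_Sigma[symmetric] by (rule dom_summable) (rule norm_hh[OF a b])
  have sm2: "hh2 a b K c l summable_on Sp"
    using summable_on_reindex_bij_betw[OF bij_rho, of "hh2 a b K c l"] sm1 by (simp add: hh_hh2[abs_def])
  have "infsum (PT a b (K @ [Suc c]) l) UNIV = infsum (hh a b K c l) (Sigma UNIV (\<lambda>_. UNIV))"
    by (rule sigma_eq_banach[symmetric]) (use sm1 hh_inner_complex[OF a b] in \<open>auto simp: UNIV_Sigma[symmetric]\<close>)
  also have "\<dots> = infsum (hh2 a b K c l) Sp"
    using infsum_reindex_bij_betw[OF bij_rho, of "hh2 a b K c l"] by (simp add: hh_hh2[abs_def] UNIV_Sigma[symmetric])
  also have "\<dots> = infsum (PT a b (K @ [c]) (l @ [1])) UNIV"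
    unfolding Sp_def by (rule sigma_eq_banach[OF sm2[unfolded Sp_def] hh2_sum[OF l]])
  finally show ?thesis using l by (simp add: CS_def)
qed


lemma Ti_real:
  fixes a b :: real
  assumes a: "a > 0" and b: "b > 0"
  shows "SS a b (K @ [Suc c]) l \<longleftrightarrow> SS a b (K @ [c]) (l @ [1])"
  using Ti_nil_real[OF a b] Ti_cons_real[OF a b] by (cases "l = []") auto

lemma Ti:
  fixes a b :: complex
  assumes a: "Re a > 0" and b: "Re b > 0"
  assumes ss: "SS (Re a) (Re b) (K @ [Suc c]) l"
  shows "CS a b (K @ [Suc c]) l = CS a b (K @ [c]) (l @ [1])"
  using Ti_nil[OF a b] Ti_cons[OF a b] ss by (cases "l = []") auto

lemma Tii_real:
  fixes a b :: real
  assumes a: "a > 0" and b: "b > 0"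
  shows "SS a b (K @ [1]) (L @ [d]) \<longleftrightarrow> SS a b K (L @ [Suc d])"
  using Ti_real[OF b a, of L d K] by (simp add: SS_sym[of a b])

lemma Tii:
  fixes a b :: complex
  assumes a: "Re a > 0" and b: "Re b > 0"
  assumes ss: "SS (Re a) (Re b) (K @ [1]) (L @ [d])"
  shows "CS a b (K @ [1]) (L @ [d]) = CS a b K (L @ [Suc d])"
proof -
  have ss': "SS (Re b) (Re a) (L @ [Suc d]) K"
    using Tii_real[of "Re a" "Re b" K L d] ss a b by (simp add: SS_sym[of "Re a" "Re b"])
  have "CS a b K (L @ [Suc d]) = CS b a (L @ [Suc d]) K" by (rule CS_sym)
  also have "\<dots> = CS b a (L @ [d]) (K @ [1])" by (rule Ti[OF b a ss'])
  also have "\<dots> = CS a b (K @ [1]) (L @ [d])" by (rule CS_sym)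
  finally show ?thesis by simp
qed

lemma chainA_real:
  fixes a b :: real
  assumes a: "a > 0" and b: "b > 0"
  shows "SS a b (K @ [c + j]) l \<longleftrightarrow> SS a b (K @ [c]) (l @ replicate j 1)"
proof (induction j arbitrary: l)
  case (Suc j)
  have "SS a b (K @ [c + Suc j]) l \<longleftrightarrow> SS a b (K @ [c + j]) (l @ [1])"
    using Ti_real[OF a b, of K "c + j" l] by simp
  also have "\<dots> \<longleftrightarrow> SS a b (K @ [c]) ((l @ [1]) @ replicate j 1)" by (rule Suc.IH)
  finally show ?case by (simp add: replicate_append_same[symmetric])
qed simp

lemma chainA:
  fixes a b :: complex
  assumes a: "Re a > 0" and b: "Re b > 0"
  shows "SS (Re a) (Re b) (K @ [c + j]) l \<Longrightarrow> CS a b (K @ [c + j]) l = CS a b (K @ [c]) (l @ replicate j 1)"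
proof (induction j arbitrary: l)
  case (Suc j)
  have ar: "Re a > 0" "Re b > 0" using a b by auto
  have "CS a b (K @ [c + Suc j]) l = CS a b (K @ [c + j]) (l @ [1])"
    using Ti[OF a b, of K "c + j" l] Suc.prems by simp
  also have "\<dots> = CS a b (K @ [c]) ((l @ [1]) @ replicate j 1)"
    by (rule Suc.IH) (use Suc.prems Ti_real[OF ar, of K "c + j" l] in simp)
  finally show ?case by (simp add: replicate_append_same[symmetric])
qed simp

lemma app_rep_Suc: "K @ replicate (Suc i) x = (K @ replicate i x) @ [x]"
  by (simp add: replicate_append_same[symmetric])

lemma chainB_real:
  fixes a b :: real
  assumes a: "a > 0" and b: "b > 0"
  shows "SS a b (K @ replicate i 1) (L @ [d]) \<longleftrightarrow> SS a b K (L @ [d + i])"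
proof (induction i arbitrary: d)
  case (Suc i)
  have "SS a b (K @ replicate (Suc i) 1) (L @ [d]) \<longleftrightarrow> SS a b (K @ replicate i 1) (L @ [Suc d])"
    unfolding app_rep_Suc by (rule Tii_real[OF a b])
  also have "\<dots> \<longleftrightarrow> SS a b K (L @ [Suc d + i])" by (rule Suc.IH)
  finally show ?case by simp
qed simp

lemma chainB:
  fixes a b :: complex
  assumes a: "Re a > 0" and b: "Re b > 0"
  shows "SS (Re a) (Re b) (K @ replicate i 1) (L @ [d]) \<Longrightarrow> CS a b (K @ replicate i 1) (L @ [d]) = CS a b K (L @ [d + i])"
proof (induction i arbitrary: d)
  case (Suc i)
  have ar: "Re a > 0" "Re b > 0" using a b by auto
  have "CS a b (K @ replicate (Suc i) 1) (L @ [d]) = CS a b (K @ replicate i 1) (L @ [Suc d])"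
    unfolding app_rep_Suc by (rule Tii[OF a b]) (use Suc.prems in \<open>simp only: app_rep_Suc\<close>)
  also have "\<dots> = CS a b K (L @ [Suc d + i])"
    by (rule Suc.IH) (use Suc.prems Tii_real[OF ar, of "K @ replicate i 1" L d] in \<open>simp only: app_rep_Suc\<close>)
  finally show ?case by simp
qed simp

lemma idx_single: "idx_of_pairs [(p, q)] = replicate p 1 @ [q + 2]"
  by (simp add: idx_of_pairs_def)

lemma idx_append: "idx_of_pairs (ps @ qs) = idx_of_pairs ps @ idx_of_pairs qs"
  by (simp add: idx_of_pairs_def)

lemma idx_Cons: "idx_of_pairs (pq # qs) = idx_of_pairs [pq] @ idx_of_pairs qs"
  using idx_append[of "[pq]" qs] by simp

lemma block_real:
  fixes a b :: real
  assumes a: "a > 0" and b: "b > 0"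
  shows "SS a b (K @ idx_of_pairs [(p, q)]) l \<longleftrightarrow> SS a b K (l @ idx_of_pairs [(q, p)])"
proof -
  have "SS a b (K @ idx_of_pairs [(p, q)]) l = SS a b ((K @ replicate p 1) @ [1 + Suc q]) l"
    by (simp add: idx_single)
  also have "\<dots> \<longleftrightarrow> SS a b ((K @ replicate p 1) @ [1]) (l @ replicate (Suc q) 1)" by (rule chainA_real[OF a b])
  also have "\<dots> \<longleftrightarrow> SS a b (K @ replicate (Suc p) 1) ((l @ replicate q 1) @ [1])"
    by (simp add: app_rep_Suc replicate_append_same)
  also have "\<dots> \<longleftrightarrow> SS a b K ((l @ replicate q 1) @ [1 + Suc p])" by (rule chainB_real[OF a b])
  also have "\<dots> = SS a b K (l @ idx_of_pairs [(q, p)])" by (simp add: idx_single)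
  finally show ?thesis .
qed

lemma block:
  fixes a b :: complex
  assumes a: "Re a > 0" and b: "Re b > 0"
  assumes ss: "SS (Re a) (Re b) (K @ idx_of_pairs [(p, q)]) l"
  shows "CS a b (K @ idx_of_pairs [(p, q)]) l = CS a b K (l @ idx_of_pairs [(q, p)])"
proof -
  have ar: "Re a > 0" "Re b > 0" using a b by auto
  have e1: "K @ idx_of_pairs [(p, q)] = (K @ replicate p 1) @ [1 + Suc q]" by (simp add: idx_single)
  have e2: "(K @ replicate p 1) @ [1] = K @ replicate (Suc p) 1" by (simp add: replicate_append_same)
  have e3: "l @ replicate (Suc q) 1 = (l @ replicate q 1) @ [1]" by (simp add: replicate_append_same)
  have e4: "(l @ replicate q 1) @ [1 + Suc p] = l @ idx_of_pairs [(q, p)]" by (simp add: idx_single)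
  have ss1: "SS (Re a) (Re b) ((K @ replicate p 1) @ [1 + Suc q]) l" using ss e1 by simp
  have ss2: "SS (Re a) (Re b) (K @ replicate (Suc p) 1) ((l @ replicate q 1) @ [1])"
    using chainA_real[OF ar, of "K @ replicate p 1" 1 "Suc q" l] ss1 e2 e3 by simp
  have "CS a b (K @ idx_of_pairs [(p, q)]) l = CS a b ((K @ replicate p 1) @ [1]) (l @ replicate (Suc q) 1)"
    unfolding e1 by (rule chainA[OF a b ss1])
  also have "\<dots> = CS a b (K @ replicate (Suc p) 1) ((l @ replicate q 1) @ [1])" unfolding e2 e3 ..
  also have "\<dots> = CS a b K ((l @ replicate q 1) @ [1 + Suc p])" by (rule chainB[OF a b ss2])
  finally show ?thesis unfolding e4 .
qed

lemma full_real:
  fixes a b :: real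
  assumes a: "a > 0" and b: "b > 0"
  shows "SS a b (K @ idx_of_pairs ps) l \<longleftrightarrow> SS a b K (l @ idx_of_pairs (rev (map prod.swap ps)))"
proof (induction ps arbitrary: l rule: rev_induct)
  case Nil then show ?case by (simp add: idx_of_pairs_def)
next
  case (snoc pq ps)
  obtain p q where pq: "pq = (p, q)" by (cases pq)
  have "SS a b (K @ idx_of_pairs (ps @ [pq])) l = SS a b ((K @ idx_of_pairs ps) @ idx_of_pairs [(p, q)]) l"
    by (simp add: idx_append pq)
  also have "\<dots> \<longleftrightarrow> SS a b (K @ idx_of_pairs ps) (l @ idx_of_pairs [(q, p)])" by (rule block_real[OF a b])
  also have "\<dots> \<longleftrightarrow> SS a b K ((l @ idx_of_pairs [(q, p)]) @ idx_of_pairs (rev (map prod.swap ps)))" by (rule snoc.IH)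
  also have "\<dots> = SS a b K (l @ idx_of_pairs (rev (map prod.swap (ps @ [pq]))))"
    by (simp add: pq idx_append[symmetric])
  finally show ?case .
qed

lemma full:
  fixes a b :: complex
  assumes a: "Re a > 0" and b: "Re b > 0"
  shows "SS (Re a) (Re b) (K @ idx_of_pairs ps) l \<Longrightarrow>
    CS a b (K @ idx_of_pairs ps) l = CS a b K (l @ idx_of_pairs (rev (map prod.swap ps)))"
proof (induction ps arbitrary: l rule: rev_induct)
  case Nil then show ?case by (simp add: idx_of_pairs_def)
next
  case (snoc pq ps)
  have ar: "Re a > 0" "Re b > 0" using a b by auto
  obtain p q where pq: "pq = (p, q)" by (cases pq)
  have e: "K @ idx_of_pairs (ps @ [pq]) = (K @ idx_of_pairs ps) @ idx_of_pairs [(p, q)]"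
    by (simp add: idx_append pq)
  have ss: "SS (Re a) (Re b) ((K @ idx_of_pairs ps) @ idx_of_pairs [(p, q)]) l" using snoc.prems e by simp
  have "CS a b (K @ idx_of_pairs (ps @ [pq])) l = CS a b (K @ idx_of_pairs ps) (l @ idx_of_pairs [(q, p)])"
    unfolding e by (rule block[OF a b ss])
  also have "\<dots> = CS a b K ((l @ idx_of_pairs [(q, p)]) @ idx_of_pairs (rev (map prod.swap ps)))"
    by (rule snoc.IH) (use block_real[OF ar, of "K @ idx_of_pairs ps" p q l] ss in simp)
  also have "\<dots> = CS a b K (l @ idx_of_pairs (rev (map prod.swap (ps @ [pq]))))"
    by (simp add: pq idx_append[symmetric])
  finally show ?case .
qed

lemma invpow_le:
  fixes b :: real
  assumes b: "b > 0" and dk: "d \<le> k"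
  shows "1 / (of_nat m + b) ^ k \<le> max 1 (1/b) ^ k * (1 / (of_nat m + b) ^ d)"
proof -
  define R where "R = max 1 (1/b)"
  have R1: "R \<ge> 1" by (simp add: R_def)
  have x: "1 / (of_nat m + b) \<le> R"
  proof -
    have "1 / (of_nat m + b) \<le> 1 / b" using b by (intro divide_left_mono) auto
    thus ?thesis unfolding R_def by linarith
  qed
  have x0: "0 \<le> 1 / (of_nat m + b)" using b by simp
  obtain e where k: "k = d + e" using dk le_Suc_ex by blast
  have "1 / (of_nat m + b) ^ k = (1 / (of_nat m + b) ^ d) * (1 / (of_nat m + b)) ^ (k - d)"
    unfolding k by (simp add: power_add power_one_over)
  also have "\<dots> \<le> (1 / (of_nat m + b) ^ d) * R ^ (k - d)"
    by (intro mult_left_mono power_mono x x0) (use b in simp)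
  also have "\<dots> \<le> (1 / (of_nat m + b) ^ d) * R ^ k"
    by (intro mult_left_mono power_increasing R1) (use b in auto)
  finally show ?thesis by (simp add: R_def mult.commute)
qed

lemma lf_le:
  fixes a b :: real
  assumes a: "a > 0" and b: "b > 0"
  shows "list_all2 (\<lambda>k d. d \<le> k) ks ds \<Longrightarrow> lf a b ks m \<le> max 1 (1/b) ^ sum_list ks * lf a b ds m"
proof (induction ks arbitrary: ds m rule: induct_list012)
  case 1 then show ?case by simp
next
  case (2 k)
  then obtain d where ds: "ds = [d]" "d \<le> k" by (auto simp: list_all2_Cons1)
  have "Aw a m / (of_nat m + b) ^ k = Aw a m * (1 / (of_nat m + b) ^ k)" by simp
  also have "\<dots> \<le> Aw a m * (max 1 (1/b) ^ k * (1 / (of_nat m + b) ^ d))"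
    by (intro mult_left_mono invpow_le b ds(2) Aw_nonneg a)
  finally show ?case using ds by (simp add: mult_ac)
next
  case (3 k k' ks)
  then obtain d d' ds' where ds: "ds = d # d' # ds'" "d \<le> k" "list_all2 (\<lambda>k d. d \<le> k) (k' # ks) (d' # ds')"
    by (auto simp: list_all2_Cons1)
  define R where "R = max 1 (1/b)"
  have R0: "R \<ge> 0" by (simp add: R_def)
  have S: "(\<Sum>i<m. lf a b (k' # ks) i) \<le> R ^ sum_list (k' # ks) * (\<Sum>i<m. lf a b (d' # ds') i)"
    unfolding sum_distrib_left R_def by (intro sum_mono "3.IH"(2)[OF ds(3)])
  have "lf a b (k # k' # ks) m = (\<Sum>i<m. lf a b (k' # ks) i) * (1 / (of_nat m + b) ^ k)" by simp
  also have "\<dots> \<le> (R ^ sum_list (k' # ks) * (\<Sum>i<m. lf a b (d' # ds') i)) * (R ^ k * (1 / (of_nat m + b) ^ d))"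
    by (intro mult_mono S invpow_le[OF b ds(2), folded R_def])
       (use a b R0 in \<open>auto intro!: sum_nonneg lf_nonneg mult_nonneg_nonneg\<close>)
  also have "\<dots> = R ^ sum_list (k # k' # ks) * lf a b ds m"
    using ds(1) by (simp add: power_add mult_ac)
  finally show ?case by (simp add: R_def)
qed

lemma AwBw: "pochhammer x (Suc m) \<noteq> 0 \<Longrightarrow> Aw x m * Bw x m = 1 / (x + of_nat m)" for x :: "'a::real_normed_field"
proof -
  assume nz: "pochhammer x (Suc m) \<noteq> 0"
  have alg: "(p / f) * (f / (p * q)) = 1 / q" if "p \<noteq> 0" "f \<noteq> 0" "q \<noteq> 0" for p f q :: 'a
    using that by (simp add: field_simps)
  show ?thesis unfolding Aw_def Bw_def pochhammer_Suc
    by (rule alg) (use nz in \<open>auto simp: pochhammer_Suc\<close>)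
qed


lemma inv_sq_summable: "(\<lambda>m. inverse (of_nat (Suc m) ^ 2) :: real) summable_on UNIV"
proof -
  have "summable (\<lambda>n. inverse (of_nat n ^ 2) :: real)" by (rule inverse_power_summable) simp
  hence "summable (\<lambda>m. inverse (of_nat (Suc m) ^ 2) :: real)" by (subst summable_Suc_iff)
  thus ?thesis by (rule summable_nonneg_imp_summable_on) simp
qed

lemma lin_lower: "a > 0 \<Longrightarrow> min a 1 * (of_nat m + 1) \<le> of_nat m + (a::real)"
  by (cases "a \<le> 1") (auto simp: min_def algebra_simps intro: mult_left_le_one_le order.trans[of _ "of_nat m"])

lemma SS_single:
  fixes a b :: real
  assumes a: "a > 0" and b: "b > 0"
  shows "SS a b [] [Suc (Suc j)]"
proof -
  define R where "R = max 1 (1/a)"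
  define C where "C = 1 / (min a 1 * min b 1)"
  have kp: "kap b a > 0" using kap_pos b a by auto
  have eq: "LTm b a [Suc (Suc j)] m = kap b a * (1 / (of_nat m + a) ^ Suc j) * (1 / (b + of_nat m))" for m
  proof -
    have "LTm b a [Suc (Suc j)] m = kap b a * (Aw b m * Bw b m) * ((of_nat m + a) / (of_nat m + a) ^ Suc (Suc j))"
      by (simp add: LTm_def mult_ac)
    also have "(of_nat m + a) / (of_nat m + a) ^ Suc (Suc j) = 1 / (of_nat m + a) ^ Suc j"
      unfolding power_Suc[of "of_nat m + a" "Suc j"] by (rule nonzero_divide_mult_cancel_left) (use a in simp)
    also have "Aw b m * Bw b m = 1 / (b + of_nat m)"
      by (rule AwBw) (use b in \<open>simp add: pochhammer_eq_0_iff\<close>)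
    finally show ?thesis by (simp add: mult_ac)
  qed
  have bound: "LTm b a [Suc (Suc j)] m \<le> (kap b a * R ^ Suc j * C) * inverse (of_nat (Suc m) ^ 2)" for m
  proof -
    have h1: "1 / (of_nat m + a) ^ Suc j \<le> R ^ Suc j * (1 / (of_nat m + a) ^ 1)"
      unfolding R_def by (rule invpow_le[OF a]) simp
    have h2: "(1 / (of_nat m + a)) * (1 / (b + of_nat m)) \<le> C * inverse (of_nat (Suc m) ^ 2)"
    proof -
      have pa: "min a 1 * (of_nat m + 1) \<le> of_nat m + a" by (rule lin_lower[OF a])
      have pb: "min b 1 * (of_nat m + 1) \<le> of_nat m + b" by (rule lin_lower[OF b])
      have pos: "0 < min a 1 * (of_nat m + 1) * (min b 1 * (of_nat m + 1))" using a b by auto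
      have "(min a 1 * (of_nat m + 1)) * (min b 1 * (of_nat m + 1)) \<le> (of_nat m + a) * (of_nat m + b)"
        by (intro mult_mono pa pb) (use a b in auto)
      hence "1 / ((of_nat m + a) * (of_nat m + b)) \<le> 1 / ((min a 1 * (of_nat m + 1)) * (min b 1 * (of_nat m + 1)))"
        by (intro divide_left_mono pos) (use pos in auto)
      also have "\<dots> = C * inverse (of_nat (Suc m) ^ 2)"
        unfolding C_def by (simp add: field_simps power2_eq_square)
      finally show ?thesis by (simp add: add.commute)
    qed
    have "LTm b a [Suc (Suc j)] m = kap b a * (1 / (of_nat m + a) ^ Suc j) * (1 / (b + of_nat m))" by (rule eq)
    also have "\<dots> \<le> kap b a * (R ^ Suc j * (1 / (of_nat m + a))) * (1 / (b + of_nat m))"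
      using h1 kp b by (intro mult_right_mono mult_left_mono) auto
    also have "\<dots> = kap b a * R ^ Suc j * ((1 / (of_nat m + a)) * (1 / (b + of_nat m)))" by (simp add: mult_ac)
    also have "\<dots> \<le> kap b a * R ^ Suc j * (C * inverse (of_nat (Suc m) ^ 2))"
      by (intro mult_left_mono h2) (use kp in \<open>auto simp: R_def\<close>)
    finally show ?thesis by (simp add: mult_ac)
  qed
  have "(\<lambda>m. (kap b a * R ^ Suc j * C) * inverse (of_nat (Suc m) ^ 2) :: real) summable_on UNIV"
    by (intro summable_on_cmult_right inv_sq_summable)
  hence "LTm b a [Suc (Suc j)] summable_on UNIV"
    by (rule summable_on_comparison_test) (use bound LTm_real_nonneg a b in auto)
  then show ?thesis by (simp add: SS_def)
qed

lemma SS_k0: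
  fixes a b :: real
  assumes a: "a > 0" and b: "b > 0"
  shows "SS a b (replicate p 1 @ [2]) []"
proof -
  have "SS a b ([] @ idx_of_pairs [(p, 0)]) [] \<longleftrightarrow> SS a b [] ([] @ idx_of_pairs (rev (map prod.swap [(p, 0)])))"
    by (rule full_real[OF a b])
  moreover have "SS a b [] [Suc (Suc p)]" by (rule SS_single[OF a b])
  moreover have "[] @ idx_of_pairs [(p, 0)] = replicate p 1 @ [2]" by (simp add: idx_single)
  moreover have "[] @ idx_of_pairs (rev (map prod.swap [(p, 0)])) = [Suc (Suc p)]" by (simp add: idx_single)
  ultimately show ?thesis by simp
qed

lemma list_all2_rep: "list_all2 P xs (replicate (length xs) y) \<longleftrightarrow> (\<forall>x\<in>set xs. P x y)"
  by (induction xs) auto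

lemma SS_adm:
  fixes a b :: real
  assumes a: "a > 0" and b: "b > 0"
  assumes K: "\<forall>k\<in>set K. k \<ge> 1" and c: "c \<ge> 1"
  shows "SS a b (K @ [Suc c]) []"
proof -
  define k0 where "k0 = replicate (length K) (1::nat) @ [Suc 1]"
  define R where "R = max 1 (1/b) ^ sum_list (c # rev K)"
  have ss0: "SS a b k0 []" unfolding k0_def using SS_k0[OF a b, of "length K"] by (simp add: numeral_2_eq_2)
  have la: "list_all2 (\<lambda>k d. d \<le> k) (c # rev K) (1 # replicate (length K) 1)"
  proof -
    have "list_all2 (\<lambda>k d. d \<le> k) (rev K) (replicate (length (rev K)) 1)"
      using K by (subst list_all2_rep) simp
    then show ?thesis using c by simp
  qed
  have nzb: "of_nat m + b \<noteq> 0" for m using b by simp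
  have "LTm a b (K @ [Suc c]) m \<le> R * LTm a b k0 m" for m
  proof -
    have "LTm a b (K @ [Suc c]) m = lf a b (c # rev K) m * (kap a b * Bw a m)" by (rule LTm_Suc[OF nzb])
    also have "\<dots> \<le> (R * lf a b (1 # replicate (length K) 1) m) * (kap a b * Bw a m)"
      unfolding R_def by (intro mult_right_mono lf_le[OF a b la] mult_nonneg_nonneg less_imp_le[OF kap_pos[OF a b]] less_imp_le[OF Bw_pos[OF a]])
    also have "\<dots> = R * LTm a b k0 m" unfolding k0_def LTm_Suc[OF nzb] by simp
    finally show ?thesis .
  qed
  moreover have "LTm a b k0 summable_on UNIV" using ss0 by (simp add: SS_def)
  ultimately have "LTm a b (K @ [Suc c]) summable_on UNIV"
  proof (intro summable_on_comparison_test[of "\<lambda>m. R * LTm a b k0 m" UNIV "LTm a b (K @ [Suc c])"])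
    assume "LTm a b k0 summable_on UNIV"
    then show "(\<lambda>m. R * LTm a b k0 m) summable_on UNIV" by (rule summable_on_cmult_right)
  next
    fix m show "0 \<le> LTm a b (K @ [Suc c]) m" by (rule LTm_real_nonneg[OF a b])
  qed
  then show ?thesis by (simp add: SS_def)
qed

definition Tset :: "nat \<Rightarrow> nat \<Rightarrow> nat list set" where
  "Tset n m = {ms \<in> incr_tuples n. last ms = m}"

definition Pg :: "'a::real_normed_field \<Rightarrow> 'a \<Rightarrow> nat list \<Rightarrow> nat list \<Rightarrow> 'a" where
  "Pg x y ks ms = Aw x (hd ms) * (\<Prod>i<length ks. 1 / (of_nat (ms ! i) + y) ^ (ks ! i))"

definition Zg :: "'a::real_normed_field \<Rightarrow> 'a \<Rightarrow> nat list \<Rightarrow> nat list \<Rightarrow> 'a" where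
  "Zg x y ks ms = Aw x (hd ms) * Bw x (last ms)
     * (\<Prod>i<length ks - 1. 1 / (of_nat (ms ! i) + y) ^ (ks ! i))
     * (1 / (of_nat (last ms) + y) ^ (last ks - 1))"

lemma Z_term_Zg: "Z_term ks a b ms = Zg a b ks ms"
  by (simp add: Z_term_def Zg_def Aw_def Bw_def)

lemma sorted_le_last: "sorted_wrt (<) xs \<Longrightarrow> x \<in> set xs \<Longrightarrow> x \<le> (last xs :: nat)"
proof -
  assume s: "sorted_wrt (<) xs" and x: "x \<in> set xs"
  have ne: "xs \<noteq> []" using x by auto
  have "sorted_wrt (<) (butlast xs @ [last xs])" using s append_butlast_last_id[OF ne] by simp
  hence "\<forall>y\<in>set (butlast xs). y < last xs" by (simp add: sorted_wrt_append)
  moreover have "x \<in> set (butlast xs) \<or> x = last xs"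
    using x append_butlast_last_id[OF ne] by (metis Un_iff empty_iff empty_set list.set(2) set_append singletonD)
  ultimately show ?thesis by auto
qed

lemma Tset_Suc:
  assumes n: "n \<ge> 1"
  shows "Tset (Suc n) m = (\<lambda>ms. ms @ [m]) ` (\<Union>m'\<in>{..<m}. Tset n m')"
proof (intro equalityI subsetI)
  fix ms assume "ms \<in> Tset (Suc n) m"
  hence len: "length ms = Suc n" and s: "sorted_wrt (<) ms" and l: "last ms = m"
    by (auto simp: Tset_def incr_tuples_def)
  have ne: "ms \<noteq> []" using len by auto
  define ms' where "ms' = butlast ms"
  have msd: "ms = ms' @ [m]" using append_butlast_last_id[OF ne] l ms'_def by simp
  have s': "sorted_wrt (<) ms'" and lt: "\<forall>x\<in>set ms'. x < m" using s msd by (auto simp: sorted_wrt_append)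
  have len': "length ms' = n" using len msd by simp
  hence ne': "ms' \<noteq> []" using n by auto
  have "last ms' < m" using lt ne' by simp
  hence "ms' \<in> (\<Union>m'\<in>{..<m}. Tset n m')" using s' len' by (auto simp: Tset_def incr_tuples_def)
  then show "ms \<in> (\<lambda>ms. ms @ [m]) ` (\<Union>m'\<in>{..<m}. Tset n m')" using msd by blast
next
  fix ms assume "ms \<in> (\<lambda>ms. ms @ [m]) ` (\<Union>m'\<in>{..<m}. Tset n m')"
  then obtain ms' m' where msd: "ms = ms' @ [m]" and m': "m' < m" and t: "ms' \<in> Tset n m'" by auto
  have len': "length ms' = n" and s': "sorted_wrt (<) ms'" and l': "last ms' = m'"
    using t by (auto simp: Tset_def incr_tuples_def)
  have "\<forall>x\<in>set ms'. x < m" using sorted_le_last[OF s'] l' m' by fastforce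
  then show "ms \<in> Tset (Suc n) m" using msd s' len' by (auto simp: Tset_def incr_tuples_def sorted_wrt_append)
qed

lemma Tset_finite: "finite (Tset n m)"
proof -
  have "Tset n m \<subseteq> {ms. set ms \<subseteq> {..m} \<and> length ms = n}"
  proof
    fix ms assume "ms \<in> Tset n m"
    hence "sorted_wrt (<) ms" "last ms = m" "length ms = n" by (auto simp: Tset_def incr_tuples_def)
    then show "ms \<in> {ms. set ms \<subseteq> {..m} \<and> length ms = n}" using sorted_le_last by auto
  qed
  moreover have "finite {ms. set ms \<subseteq> {..m} \<and> length ms = n}" by (rule finite_lists_length_eq) simp
  ultimately show ?thesis by (rule finite_subset)
qed

lemma Tset_1: "Tset (Suc 0) m = {[m]}"
  by (auto simp: Tset_def incr_tuples_def length_Suc_conv)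

lemma Pg_snoc:
  assumes "length ms = length ks" "ms \<noteq> []"
  shows "Pg x y (ks @ [k]) (ms @ [m]) = Pg x y ks ms * (1 / (of_nat m + y) ^ k)"
  using assms by (simp add: Pg_def nth_append mult.assoc)

lemma sum_Pg:
  "ks \<noteq> [] \<Longrightarrow> (\<Sum>ms\<in>Tset (length ks) m. Pg x y ks ms) = lf x y (rev ks) m"
proof (induction ks arbitrary: m rule: rev_induct)
  case Nil then show ?case by simp
next
  case (snoc k ks)
  show ?case
  proof (cases "ks = []")
    case True
    then show ?thesis by (simp add: Tset_1 Pg_def)
  next
    case False
    define n where "n = length ks"
    have n: "n \<ge> 1" using False by (simp add: n_def Suc_le_eq)
    have inj: "inj_on (\<lambda>ms. ms @ [m]) (\<Union>m'\<in>{..<m}. Tset n m')" by (rule inj_onI) simp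
    have "(\<Sum>ms\<in>Tset (length (ks @ [k])) m. Pg x y (ks @ [k]) ms)
        = (\<Sum>ms\<in>(\<Union>m'\<in>{..<m}. Tset n m'). Pg x y (ks @ [k]) (ms @ [m]))"
      unfolding n_def[symmetric] length_append_singleton Tset_Suc[OF n] sum.reindex[OF inj] by simp
    also have "\<dots> = (\<Sum>m'<m. \<Sum>ms\<in>Tset n m'. Pg x y (ks @ [k]) (ms @ [m]))"
      by (rule sum.UNION_disjoint) (auto simp: Tset_finite, auto simp: Tset_def)
    also have "\<dots> = (\<Sum>m'<m. \<Sum>ms\<in>Tset n m'. Pg x y ks ms * (1 / (of_nat m + y) ^ k))"
    proof (intro sum.cong refl)
      fix m' ms assume "ms \<in> Tset n m'"
      hence "length ms = length ks" "ms \<noteq> []" using n by (auto simp: Tset_def incr_tuples_def n_def)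
      then show "Pg x y (ks @ [k]) (ms @ [m]) = Pg x y ks ms * (1 / (of_nat m + y) ^ k)" by (rule Pg_snoc)
    qed
    also have "\<dots> = (\<Sum>m'<m. lf x y (rev ks) m') * (1 / (of_nat m + y) ^ k)"
      unfolding sum_distrib_right[symmetric] n_def snoc.IH[OF False] ..
    also have "\<dots> = lf x y (rev (ks @ [k])) m"
      using False by (cases "rev ks") auto
    finally show ?thesis .
  qed
qed


lemma Zg_Pg:
  assumes len: "length ms = Suc (length K)"
  shows "Zg x y (K @ [Suc c]) ms = Pg x y (K @ [c]) ms * Bw x (last ms)"
proof -
  have ne: "ms \<noteq> []" using len by auto
  have l: "last ms = ms ! length K" using last_conv_nth[OF ne] len by simp
  have P1: "(\<Prod>i<length K. 1 / (of_nat (ms ! i) + y) ^ ((K @ [Suc c]) ! i)) =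
            (\<Prod>i<length K. 1 / (of_nat (ms ! i) + y) ^ ((K @ [c]) ! i))"
    by (intro prod.cong refl) (simp add: nth_append)
  have P2: "(\<Prod>i<length (K @ [c]). 1 / (of_nat (ms ! i) + y) ^ ((K @ [c]) ! i)) =
            (\<Prod>i<length K. 1 / (of_nat (ms ! i) + y) ^ ((K @ [c]) ! i)) * (1 / (of_nat (ms ! length K) + y) ^ c)"
    by (simp add: prod.lessThan_Suc)
  show ?thesis unfolding Zg_def Pg_def P2 using P1 l by (simp add: mult_ac)
qed

lemma Zg_nonneg: "a > 0 \<Longrightarrow> b > 0 \<Longrightarrow> Zg (a::real) b ks ms \<ge> 0"
  unfolding Zg_def
  by (intro mult_nonneg_nonneg prod_nonneg Aw_nonneg less_imp_le[OF Bw_pos]) auto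

lemma norm_Zg:
  assumes a: "Re a > 0" and b: "Re b > 0"
  shows "norm (Zg a b ks ms) \<le> KP a * Zg (Re a) (Re b) ks ms"
proof -
  have p: "norm (\<Prod>i<length ks - 1. 1 / (of_nat (ms ! i) + b) ^ (ks ! i)) \<le>
        (\<Prod>i<length ks - 1. 1 / (of_nat (ms ! i) + Re b) ^ (ks ! i))"
    unfolding prod_norm[symmetric] by (intro prod_mono conjI norm_invpow b norm_ge_zero)
  have "norm (Zg a b ks ms) = norm (Aw a (hd ms)) * norm (Bw a (last ms))
     * norm (\<Prod>i<length ks - 1. 1 / (of_nat (ms ! i) + b) ^ (ks ! i))
     * norm (1 / (of_nat (last ms) + b) ^ (last ks - 1))"
    unfolding Zg_def norm_mult ..
  also have "\<dots> \<le> (KP a * Aw (Re a) (hd ms)) * Bw (Re a) (last ms)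
     * (\<Prod>i<length ks - 1. 1 / (of_nat (ms ! i) + Re b) ^ (ks ! i))
     * (1 / (of_nat (last ms) + Re b) ^ (last ks - 1))"
    by (intro mult_mono norm_Aw norm_Bw norm_invpow a b p)
       (use a b in \<open>auto intro!: mult_nonneg_nonneg prod_nonneg Aw_nonneg less_imp_le[OF Bw_pos] less_imp_le[OF KP_pos]\<close>)
  also have "\<dots> = KP a * Zg (Re a) (Re b) ks ms" by (simp add: Zg_def mult_ac)
  finally show ?thesis .
qed

lemma bij_last: "n \<ge> 1 \<Longrightarrow> bij_betw (\<lambda>ms. (last ms, ms)) (incr_tuples n) (Sigma UNIV (Tset n))"
  by (rule bij_betwI[of _ _ _ snd]) (auto simp: Tset_def)

lemma inner_Zg:
  "((\<lambda>ms. Zg x y (K @ [Suc c]) ms) has_sum (lf x y (c # rev K) m * Bw x m)) (Tset (Suc (length K)) m)"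
proof -
  have "(\<Sum>ms\<in>Tset (Suc (length K)) m. Zg x y (K @ [Suc c]) ms) =
        (\<Sum>ms\<in>Tset (length (K @ [c])) m. Pg x y (K @ [c]) ms * Bw x m)"
    by (intro sum.cong) (auto simp: Tset_def incr_tuples_def Zg_Pg)
  also have "\<dots> = lf x y (c # rev K) m * Bw x m"
  proof -
    have "(\<Sum>ms\<in>Tset (length (K @ [c])) m. Pg x y (K @ [c]) ms) = lf x y (c # rev K) m"
      using sum_Pg[where ks="K @ [c]" and m=m and x=x and y=y] by simp
    then show ?thesis unfolding sum_distrib_right[symmetric] by simp
  qed
  finally show ?thesis by (intro has_sum_finiteI Tset_finite) simp
qed

lemma Z_conv:
  fixes a b :: complex
  assumes a: "Re a > 0" and b: "Re b > 0"
  assumes ss: "SS (Re a) (Re b) (K @ [Suc c]) []"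
  shows "CS a b (K @ [Suc c]) [] = kap a b * Z (K @ [Suc c]) a b"
proof -
  define n where "n = Suc (length K)"
  have n1: "n \<ge> 1" by (simp add: n_def)
  have ar: "Re a > 0" "Re b > 0" using a b by auto
  have kpr: "kap (Re a) (Re b) > 0" using kap_pos ar by auto
  have nzr: "of_nat m + Re b \<noteq> 0" for m using b by simp
  have "LTm (Re a) (Re b) (K @ [Suc c]) summable_on UNIV" using ss by (simp add: SS_def)
  hence "(\<lambda>m. (1 / kap (Re a) (Re b)) * LTm (Re a) (Re b) (K @ [Suc c]) m) summable_on UNIV"
    by (rule summable_on_cmult_right)
  moreover have "(1 / kap (Re a) (Re b)) * LTm (Re a) (Re b) (K @ [Suc c]) m = lf (Re a) (Re b) (c # rev K) m * Bw (Re a) m" for m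
    unfolding LTm_Suc[OF nzr] using kpr by simp
  ultimately have sr: "(\<lambda>m. lf (Re a) (Re b) (c # rev K) m * Bw (Re a) m) summable_on UNIV" by simp
  have "(\<lambda>p. Zg (Re a) (Re b) (K @ [Suc c]) (snd p)) summable_on Sigma UNIV (Tset n) \<longleftrightarrow>
        (\<lambda>m. lf (Re a) (Re b) (c # rev K) m * Bw (Re a) m) summable_on UNIV"
  proof (rule sigma_iff_real)
    fix m :: nat
    show "((\<lambda>ms. Zg (Re a) (Re b) (K @ [Suc c]) (snd (m, ms))) has_sum lf (Re a) (Re b) (c # rev K) m * Bw (Re a) m) (Tset n m)"
      using inner_Zg[of "Re a" "Re b" K c m] by (simp add: n_def)
  next
    fix m ms show "0 \<le> Zg (Re a) (Re b) (K @ [Suc c]) (snd (m, ms))" using Zg_nonneg ar by simp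
  qed
  with sr have "(\<lambda>p. Zg (Re a) (Re b) (K @ [Suc c]) (snd p)) summable_on Sigma UNIV (Tset n)" by simp
  hence sm: "(\<lambda>p. Zg a b (K @ [Suc c]) (snd p)) summable_on Sigma UNIV (Tset n)"
    by (rule dom_summable) (rule norm_Zg[OF a b])
  have "Z (K @ [Suc c]) a b = infsum (Zg a b (K @ [Suc c])) (incr_tuples n)"
    unfolding Z_def n_def by (simp add: Z_term_Zg[abs_def])
  also have "\<dots> = infsum (\<lambda>p. Zg a b (K @ [Suc c]) (snd p)) (Sigma UNIV (Tset n))"
    using infsum_reindex_bij_betw[OF bij_last[OF n1], of "\<lambda>p. Zg a b (K @ [Suc c]) (snd p)"] by simp
  also have "\<dots> = infsum (\<lambda>m. lf a b (c # rev K) m * Bw a m) UNIV"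
    by (rule sigma_eq_banach[OF sm]) (use inner_Zg n_def in simp)
  finally have Zeq: "Z (K @ [Suc c]) a b = infsum (\<lambda>m. lf a b (c # rev K) m * Bw a m) UNIV" .
  have so: "(\<lambda>m. lf a b (c # rev K) m * Bw a m) summable_on UNIV"
  proof -
    have "(\<lambda>m. infsum (\<lambda>ms. Zg a b (K @ [Suc c]) (snd (m, ms))) (Tset n m)) summable_on UNIV"
      by (rule summable_on_SigmaD[OF sm]) (simp add: Tset_finite)
    moreover have "infsum (\<lambda>ms. Zg a b (K @ [Suc c]) (snd (m, ms))) (Tset n m) = lf a b (c # rev K) m * Bw a m" for m
      using inner_Zg[of a b K c m] unfolding n_def by (simp add: infsumI)
    ultimately show ?thesis by simp
  qed
  have nz: "of_nat m + b \<noteq> 0" for m using add_nat_Re_nz[OF b, of m] by (simp add: add.commute)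
  have "LTm a b (K @ [Suc c]) = (\<lambda>m. kap a b * (lf a b (c # rev K) m * Bw a m))"
    by (rule ext) (simp add: LTm_Suc[OF nz] mult_ac)
  hence "CS a b (K @ [Suc c]) [] = infsum (\<lambda>m. kap a b * (lf a b (c # rev K) m * Bw a m)) UNIV"
    unfolding CS_def by simp
  also have "\<dots> = kap a b * infsum (\<lambda>m. lf a b (c # rev K) m * Bw a m) UNIV"
    by (rule infsum_cmult_right) (use so in simp)
  finally show ?thesis using Zeq by simp
qed

lemma idx_Cons_pair: "idx_of_pairs ((p, q) # ps) = replicate p 1 @ (q + 2) # idx_of_pairs ps"
  by (simp add: idx_of_pairs_def)

lemma idx_Nil: "idx_of_pairs [] = []" by (simp add: idx_of_pairs_def)

lemma rep_split_eq:
  "replicate p (1::nat) @ (q + 2) # xs = replicate p' 1 @ (q' + 2) # ys \<Longrightarrow> p = p' \<and> q = q' \<and> xs = ys"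
proof (induction p arbitrary: p')
  case 0 then show ?case by (cases p') auto
next
  case (Suc p) then show ?case by (cases p') auto
qed

lemma idx_inj: "idx_of_pairs ps = idx_of_pairs qs \<Longrightarrow> ps = qs"
proof (induction ps arbitrary: qs)
  case Nil then show ?case by (cases qs) (auto simp: idx_Nil idx_Cons_pair)
next
  case (Cons pq ps)
  obtain p q where pq: "pq = (p, q)" by (cases pq)
  show ?case
  proof (cases qs)
    case Nil then show ?thesis using Cons.prems by (simp add: pq idx_Nil idx_Cons_pair)
  next
    case (Cons pq' qs')
    obtain p' q' where pq': "pq' = (p', q')" by (cases pq')
    from Cons.prems have "replicate p 1 @ (q + 2) # idx_of_pairs ps = replicate p' 1 @ (q' + 2) # idx_of_pairs qs'"
      by (simp add: pq pq' Cons idx_Cons_pair)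
    from rep_split_eq[OF this] Cons.IH show ?thesis by (simp add: pq pq' Cons)
  qed
qed

lemma idx_exists:
  "ks \<noteq> [] \<Longrightarrow> (\<forall>k\<in>set ks. k \<ge> 1) \<Longrightarrow> last ks \<ge> 2 \<Longrightarrow> \<exists>ps. idx_of_pairs ps = ks"
proof (induction ks)
  case Nil then show ?case by simp
next
  case (Cons k ks)
  show ?case
  proof (cases "ks = []")
    case True
    then have "k \<ge> 2" using Cons.prems by simp
    then have "idx_of_pairs [(0, k - 2)] = k # ks" using True by (simp add: idx_single)
    then show ?thesis by blast
  next
    case False
    then obtain ps where ps: "idx_of_pairs ps = ks" using Cons.IH Cons.prems by auto
    show ?thesis
    proof (cases "k = 1")
      case True
      have "ps \<noteq> []" using ps False by (auto simp: idx_Nil)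
      then obtain p q ps' where ps': "ps = (p, q) # ps'" by (metis list.exhaust prod.exhaust)
      have "idx_of_pairs ((Suc p, q) # ps') = k # ks" using ps ps' True by (simp add: idx_Cons_pair)
      then show ?thesis by blast
    next
      case False
      hence "k \<ge> 2" using Cons.prems by auto
      hence "idx_of_pairs ((0, k - 2) # ps) = k # ks" using ps by (simp add: idx_Cons_pair)
      then show ?thesis by blast
    qed
  qed
qed

lemma dual_eq: "idx_of_pairs ps = ks \<Longrightarrow> dual_index ks = idx_of_pairs (rev (map prod.swap ps))"
proof -
  assume ps: "idx_of_pairs ps = ks"
  have "(THE ps. idx_of_pairs ps = ks) = ps"
  proof (rule the_equality)
    show "idx_of_pairs ps = ks" by (rule ps)
  next
    fix qs assume "idx_of_pairs qs = ks"
    then show "qs = ps" using ps idx_inj by metis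
  qed
  then show ?thesis by (simp add: dual_index_def)
qed

lemma idx_snoc_form: "ps \<noteq> [] \<Longrightarrow> \<exists>K c. idx_of_pairs ps = K @ [Suc c]"
proof -
  assume "ps \<noteq> []"
  then obtain ps' p q where ps: "ps = ps' @ [(p, q)]" by (metis rev_exhaust prod.exhaust)
  have "idx_of_pairs ps = (idx_of_pairs ps' @ replicate p 1) @ [Suc (Suc q)]"
    unfolding ps idx_append idx_single by simp
  then show ?thesis by blast
qed

theorem lemma2p4:
  fixes ks :: "nat list" and \<alpha> \<beta> :: complex
  assumes "admissible ks" and "Re \<alpha> > 0" and "Re \<beta> > 0"
  shows "Z ks \<alpha> \<beta> = Z (dual_index ks) \<beta> \<alpha>"
proof -
  have a: "Re \<alpha> > 0" and b: "Re \<beta> > 0" using assms by auto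
  have ar: "Re \<alpha> > 0" "Re \<beta> > 0" using a b by auto
  have ne: "ks \<noteq> []" and ge1: "\<forall>k\<in>set ks. k \<ge> 1" and l2: "last ks \<ge> 2"
    using assms(1) by (auto simp: admissible_def)
  obtain ps where ps: "idx_of_pairs ps = ks" using idx_exists[OF ne ge1 l2] by blast
  have psne: "ps \<noteq> []" using ps ne by (auto simp: idx_Nil)
  define dual where "dual = idx_of_pairs (rev (map prod.swap ps))"
  have dual: "dual_index ks = dual" unfolding dual_def by (rule dual_eq[OF ps])
  define K where "K = butlast ks"
  define c where "c = last ks - 1"
  have ksd: "ks = K @ [Suc c]" using ne l2 by (simp add: K_def c_def append_butlast_last_id)
  have Kge: "\<forall>k\<in>set K. k \<ge> 1" using ge1 by (simp add: K_def in_set_butlastD)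
  have c1: "c \<ge> 1" using l2 by (simp add: c_def)
  have ss: "SS (Re \<alpha>) (Re \<beta>) ks []" unfolding ksd by (rule SS_adm[OF ar Kge c1])
  have ssd: "SS (Re \<alpha>) (Re \<beta>) [] dual"
    using full_real[OF ar, of "[]" ps "[]"] ss ps by (simp add: dual_def)
  obtain K' c' where dd: "dual = K' @ [Suc c']"
    using idx_snoc_form[of "rev (map prod.swap ps)"] psne by (auto simp: dual_def)
  have ssd': "SS (Re \<beta>) (Re \<alpha>) (K' @ [Suc c']) []" using ssd dd SS_sym by metis
  have "kap \<alpha> \<beta> * Z ks \<alpha> \<beta> = CS \<alpha> \<beta> ks []"
    unfolding ksd by (rule Z_conv[OF a b, symmetric]) (use ss ksd in simp)
  also have "\<dots> = CS \<alpha> \<beta> [] dual"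
    using full[OF a b, of "[]" ps "[]"] ss ps by (simp add: dual_def)
  also have "\<dots> = CS \<beta> \<alpha> dual []" by (rule CS_sym)
  also have "\<dots> = kap \<beta> \<alpha> * Z dual \<beta> \<alpha>"
    unfolding dd by (rule Z_conv[OF b a ssd'])
  finally have "kap \<alpha> \<beta> * Z ks \<alpha> \<beta> = kap \<alpha> \<beta> * Z dual \<beta> \<alpha>" by (simp add: kap_sym)
  moreover have "kap \<alpha> \<beta> \<noteq> 0" by (rule kap_nz[OF a b])
  ultimately show ?thesis by (simp add: dual)
qed

end
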